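(* Let $U$ be an effectively optimal machine, and let $A=\{x: U(x)=0\}$ and $B=\{x:U(x)=1\}$ (where $0,1$ denote the one-bit strings). Then $A$ and $B$ are disjoint and computably inseparable. Moreover, for every partial computable function $h$ from binary strings to $\{0,1\}$, letting $$E_n=\frac{\#\{x: |x|\le n,\ h(x)\text{ undefined, or } (x\in A\wedge h(x)=1), \text{ or } (x\in B\wedge h(x)=0)\}}{2^{n+1}},$$ we have $\liminf_n E_n>0$.
   Context: A machine is a partial computable function from binary strings to binary strings. A total function $h$ on strings is length-bounded if $|h(x)|\le|x|+c$ for some $c$ and all $x$. $U$ is effectively optimal if for every machine $V$ there is a total computable length-bounded $h$ with $V(x)=U(h(x))$ for all $x$ (both sides undefined, or both defined and equal). Disjoint sets $A,B$ are computably inseparable if there is no total computable $0/1$-valued $h$ with $h=0$ on $A$ and $h=1$ on $B$. *)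

theory Defs
  imports Complex_Main "HOL-Library.Extended_Real" "HOL-Library.Liminf_Limsup"
begin

datatype recf =
    Zero
  | Succ
  | Proj nat
  | Comp recf "recf list"
  | Prim recf recf
  | Mn recf

inductive eval :: "recf \<Rightarrow> nat list \<Rightarrow> nat \<Rightarrow> bool" where
  zero: "eval Zero xs 0"
| succ: "eval Succ (x # xs) (Suc x)"
| proj: "i < length xs \<Longrightarrow> eval (Proj i) xs (xs ! i)"
| comp: "list_all2 (\<lambda>g y. eval g xs y) gs ys \<Longrightarrow> eval f ys z \<Longrightarrow> eval (Comp f gs) xs z"
| prim0: "eval f xs z \<Longrightarrow> eval (Prim f g) (0 # xs) z"
| primS: "eval (Prim f g) (n # xs) y \<Longrightarrow> eval g (n # y # xs) z
          \<Longrightarrow> eval (Prim f g) (Suc n # xs) z"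
| mu: "eval f (n # xs) 0 \<Longrightarrow> (\<forall>m<n. \<exists>k. eval f (m # xs) (Suc k))
          \<Longrightarrow> eval (Mn f) xs n"

text \<open>Binary strings are bool lists (False = bit 0, True = bit 1).
  Computable bijection with the naturals (bijective base-2 numeration).\<close>
fun s2n :: "bool list \<Rightarrow> nat" where
  "s2n [] = 0"
| "s2n (b # bs) = 2 * s2n bs + (if b then 2 else 1)"

definition partial_computable :: "(bool list \<Rightarrow> bool list option) \<Rightarrow> bool" where
  "partial_computable V \<longleftrightarrow>
     (\<exists>f. \<forall>x y. V x = Some y \<longleftrightarrow> eval f [s2n x] (s2n y))"

abbreviation machine :: "(bool list \<Rightarrow> bool list option) \<Rightarrow> bool" where
  "machine V \<equiv> partial_computable V"

definition total_computable :: "(bool list \<Rightarrow> bool list) \<Rightarrow> bool" where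
  "total_computable h \<longleftrightarrow> partial_computable (\<lambda>x. Some (h x))"

definition length_bounded :: "(bool list \<Rightarrow> bool list) \<Rightarrow> bool" where
  "length_bounded h \<longleftrightarrow> (\<exists>c. \<forall>x. length (h x) \<le> length x + c)"

definition effectively_optimal :: "(bool list \<Rightarrow> bool list option) \<Rightarrow> bool" where
  "effectively_optimal U \<longleftrightarrow> machine U \<and>
     (\<forall>V. machine V \<longrightarrow>
        (\<exists>h. total_computable h \<and> length_bounded h \<and> (\<forall>x. V x = U (h x))))"

abbreviation bit0 :: "bool list" where "bit0 \<equiv> [False]"
abbreviation bit1 :: "bool list" where "bit1 \<equiv> [True]"

definition computably_inseparable :: "bool list set \<Rightarrow> bool list set \<Rightarrow> bool" where
  "computably_inseparable A B \<longleftrightarrow>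
     \<not> (\<exists>h. total_computable h \<and> (\<forall>x. h x \<in> {bit0, bit1}) \<and>
            (\<forall>x\<in>A. h x = bit0) \<and> (\<forall>x\<in>B. h x = bit1))"

end

theory Submission
  imports Defs "HOL-Library.Nat_Bijection"
begin


inductive_cases evalZeroE: "eval Zero xs y"
inductive_cases evalSuccE: "eval Succ xs y"
inductive_cases evalProjE: "eval (Proj i) xs y"
inductive_cases evalCompE: "eval (Comp f gs) xs y"
inductive_cases evalPrimE: "eval (Prim f g) xs y"
inductive_cases evalMnE: "eval (Mn f) xs y"

lemma list_all2_unique:
  "list_all2 (\<lambda>g y. P g y \<and> (\<forall>y'. P g y' \<longrightarrow> y = y')) gs ys \<Longrightarrow> list_all2 P gs ys' \<Longrightarrow> ys = ys'"
proof (induction gs arbitrary: ys ys')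
  case Nil then show ?case by simp
next
  case (Cons g gs)
  from Cons.prems(1) obtain y yr where 1: "ys = y # yr" "P g y" "\<forall>y'. P g y' \<longrightarrow> y = y'"
    "list_all2 (\<lambda>g y. P g y \<and> (\<forall>y'. P g y' \<longrightarrow> y = y')) gs yr"
    unfolding list_all2_Cons1 by blast
  from Cons.prems(2) obtain y' yr' where 2: "ys' = y' # yr'" "P g y'" "list_all2 P gs yr'"
    unfolding list_all2_Cons1 by blast
  have "yr = yr'" by (rule Cons.IH[OF 1(4) 2(3)])
  moreover have "y = y'" using 1(3) 2(2) by blast
  ultimately show ?case using 1(1) 2(1) by simp
qed

lemma eval_det: "eval f xs y \<Longrightarrow> eval f xs y' \<Longrightarrow> y = y'"
proof (induction arbitrary: y' rule: eval.induct)
  case (zero xs) then show ?case by (auto elim: evalZeroE)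
next
  case (succ x xs) then show ?case by (auto elim: evalSuccE)
next
  case (proj i xs) then show ?case by (auto elim: evalProjE)
next
  case (comp xs gs ys f z)
  from comp.prems obtain ys' where a: "list_all2 (\<lambda>g y. eval g xs y) gs ys'" "eval f ys' y'"
    by (rule evalCompE) blast
  have "list_all2 (\<lambda>g y. eval g xs y \<and> (\<forall>y'. eval g xs y' \<longrightarrow> y = y')) gs ys"
    using comp.IH(1) by (rule list_all2_mono) blast
  from list_all2_unique[OF this a(1)] a(2) comp.IH(2) show ?case by blast
next
  case (prim0 f xs z g)
  from prim0.prems have "eval f xs y'" by (cases rule: evalPrimE) auto
  then show ?case using prim0.IH by blast
next
  case (primS f g n xs y z)
  from primS.prems obtain y'' where "eval (Prim f g) (n # xs) y''" "eval g (n # y'' # xs) y'"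
    by (cases rule: evalPrimE) auto
  then show ?case using primS.IH by blast
next
  case (mu f n xs)
  from mu.prems obtain n' where n': "y' = n'" "eval f (n' # xs) 0" "\<forall>m<n'. \<exists>k. eval f (m # xs) (Suc k)"
    by (rule evalMnE) blast
  show ?case
  proof (cases n n' rule: linorder_cases)
    case less
    then obtain k where "eval f (n # xs) (Suc k)" using n'(3) by blast
    with mu.IH(1) show ?thesis by fastforce
  next
    case greater
    then obtain k where "eval f (n' # xs) (Suc k) \<and> (\<forall>y'. eval f (n' # xs) y' \<longrightarrow> Suc k = y')" using mu.IH(2) by blast
    with n'(2) show ?thesis by blast
  qed (simp add: n')
qed

definition rf :: "nat \<Rightarrow> (nat list \<Rightarrow> nat) \<Rightarrow> bool" where
  "rf n F \<longleftrightarrow> (\<exists>f. \<forall>xs. length xs = n \<longrightarrow> eval f xs (F xs))"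

lemma rf_ext: "rf n F \<Longrightarrow> (\<And>xs. length xs = n \<Longrightarrow> F xs = G xs) \<Longrightarrow> rf n G"
  unfolding rf_def by (erule exE) (rule exI, simp)

lemma rf_proj: "i < n \<Longrightarrow> rf n (\<lambda>xs. xs ! i)"
  unfolding rf_def by (intro exI[of _ "Proj i"] allI impI eval.proj) simp

lemma rf_zero: "rf n (\<lambda>xs. 0)"
  unfolding rf_def by (intro exI[of _ "Zero"] allI impI eval.zero)

lemma choose_list: "\<forall>F\<in>set Fs. \<exists>f. P F f \<Longrightarrow> \<exists>fs. list_all2 P Fs fs"
proof (induction Fs)
  case (Cons F Fs)
  then obtain f fs where "P F f" "list_all2 P Fs fs" by auto
  then show ?case by (intro exI[of _ "f # fs"]) simp
qed (intro exI[of _ "[]"], simp)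

lemma rf_comp:
  assumes "\<forall>F\<in>set Fs. rf n F" "rf (length Fs) G"
  shows "rf n (\<lambda>xs. G (map (\<lambda>F. F xs) Fs))"
proof -
  have "\<forall>F\<in>set Fs. \<exists>f. \<forall>xs. length xs = n \<longrightarrow> eval f xs (F xs)"
    using assms(1) unfolding rf_def .
  from choose_list[OF this] obtain fs where
    fs: "list_all2 (\<lambda>F f. \<forall>xs. length xs = n \<longrightarrow> eval f xs (F xs)) Fs fs" ..
  from assms(2) obtain g where g: "\<forall>ys. length ys = length Fs \<longrightarrow> eval g ys (G ys)"
    unfolding rf_def ..
  show ?thesis unfolding rf_def
  proof (intro exI allI impI)
    fix xs :: "nat list" assume xs: "length xs = n"
    have "list_all2 (\<lambda>g y. eval g xs y) fs (map (\<lambda>F. F xs) Fs)"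
      using fs xs unfolding list_all2_conv_all_nth by simp
    moreover have "eval g (map (\<lambda>F. F xs) Fs) (G (map (\<lambda>F. F xs) Fs))"
      using g by simp
    ultimately show "eval (Comp g fs) xs (G (map (\<lambda>F. F xs) Fs))"
      by (rule eval.comp)
  qed
qed

fun primH :: "(nat list \<Rightarrow> nat) \<Rightarrow> (nat list \<Rightarrow> nat) \<Rightarrow> nat \<Rightarrow> nat list \<Rightarrow> nat" where
  "primH B S 0 e = B e"
| "primH B S (Suc i) e = S (i # primH B S i e # e)"

lemma rf_prim:
  assumes "rf n B" "rf (Suc (Suc n)) S"
  shows "rf (Suc n) (\<lambda>xs. primH B S (hd xs) (tl xs))"
proof -
  obtain b where b: "\<forall>xs. length xs = n \<longrightarrow> eval b xs (B xs)" using assms(1) unfolding rf_def ..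
  obtain s where s: "\<forall>xs. length xs = Suc (Suc n) \<longrightarrow> eval s xs (S xs)" using assms(2) unfolding rf_def ..
  have ev: "eval (Prim b s) (i # e) (primH B S i e)" if "length e = n" for i e
  proof (induction i)
    case 0 then show ?case using b that by (simp add: eval.prim0)
  next
    case (Suc i)
    have "eval s (i # primH B S i e # e) (S (i # primH B S i e # e))" using s that by simp
    with Suc show ?case by (simp add: eval.primS)
  qed
  show ?thesis unfolding rf_def
  proof (intro exI allI impI)
    fix xs :: "nat list" assume "length xs = Suc n"
    then obtain i e where "xs = i # e" "length e = n" by (cases xs) auto
    then show "eval (Prim b s) xs (primH B S (hd xs) (tl xs))" using ev by simp
  qed
qed

lemma map_nth_eq: "length xs = n \<Longrightarrow> map (\<lambda>i. xs ! i) [0..<n] = xs"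
  by (rule nth_equalityI) auto

lemma rf_comp1: "rf 1 G \<Longrightarrow> rf n F \<Longrightarrow> rf n (\<lambda>xs. G [F xs])"
  using rf_comp[of "[F]" n G] by simp
lemma rf_comp2: "rf 2 G \<Longrightarrow> rf n F1 \<Longrightarrow> rf n F2 \<Longrightarrow> rf n (\<lambda>xs. G [F1 xs, F2 xs])"
  using rf_comp[of "[F1,F2]" n G] by (simp add: numeral_2_eq_2)
lemma rf_comp3: "rf 3 G \<Longrightarrow> rf n F1 \<Longrightarrow> rf n F2 \<Longrightarrow> rf n F3 \<Longrightarrow> rf n (\<lambda>xs. G [F1 xs, F2 xs, F3 xs])"
  using rf_comp[of "[F1,F2,F3]" n G] by (simp add: numeral_3_eq_3)

lemma rf_op1: "rf 1 (\<lambda>e. g (e!0)) \<Longrightarrow> rf n F \<Longrightarrow> rf n (\<lambda>xs. g (F xs))"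
  using rf_comp1[of "\<lambda>e. g (e!0)" n F] by simp
lemma rf_op2: "rf 2 (\<lambda>e. g (e!0) (e!1)) \<Longrightarrow> rf n F1 \<Longrightarrow> rf n F2 \<Longrightarrow> rf n (\<lambda>xs. g (F1 xs) (F2 xs))"
  using rf_comp2[of "\<lambda>e. g (e!0) (e!1)" n F1 F2] by simp
lemma rf_op3: "rf 3 (\<lambda>e. g (e!0) (e!1) (e!2)) \<Longrightarrow> rf n F1 \<Longrightarrow> rf n F2 \<Longrightarrow> rf n F3 \<Longrightarrow> rf n (\<lambda>xs. g (F1 xs) (F2 xs) (F3 xs))"
  using rf_comp3[of "\<lambda>e. g (e!0) (e!1) (e!2)" n F1 F2 F3] by simp

lemma rf_succ: "rf n F \<Longrightarrow> rf n (\<lambda>xs. Suc (F xs))"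
proof -
  have "rf 1 (\<lambda>e. Suc (e!0))" unfolding rf_def
    by (auto intro!: exI[of _ Succ] eval.succ simp: length_Suc_conv)
  then show "rf n F \<Longrightarrow> rf n (\<lambda>xs. Suc (F xs))" by (rule rf_op1)
qed

lemma rf_const: "rf n (\<lambda>xs. k)"
  by (induction k) (auto intro: rf_zero rf_succ)

lemma rf_primc:
  assumes "rf n B" "rf (Suc (Suc n)) S" "rf n C"
  shows "rf n (\<lambda>xs. primH B S (C xs) xs)"
proof -
  have 1: "rf (Suc n) (\<lambda>xs. primH B S (hd xs) (tl xs))" by (rule rf_prim[OF assms(1,2)])
  have "rf n (\<lambda>xs. (\<lambda>ys. primH B S (hd ys) (tl ys)) (map (\<lambda>F. F xs) (C # map (\<lambda>i xs. xs!i) [0..<n])))"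
    by (rule rf_comp) (auto intro: assms rf_proj 1)
  then show ?thesis by (rule rf_ext) (simp add: comp_def map_nth_eq)
qed


lemma rf_rec:
  assumes "rf n B" "rf (Suc (Suc n)) S" "rf n C"
    and "\<And>e. length e = n \<Longrightarrow> primH B S (C e) e = F e"
  shows "rf n F"
  using rf_ext[OF rf_primc[OF assms(1-3)]] assms(4) by blast

lemma rf_add2: "rf 2 (\<lambda>e. e!0 + e!1)"
proof (rule rf_rec[where B="\<lambda>e. e!1" and S="\<lambda>e. Suc (e!1)" and C="\<lambda>e. e!0"])
  fix e :: "nat list"
  have "primH (\<lambda>e. e!1) (\<lambda>e. Suc (e!1)) i e = i + e!1" for i by (induction i) auto
  then show "primH (\<lambda>e. e!1) (\<lambda>e. Suc (e!1)) (e!0) e = e!0 + e!1" .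
qed (intro rf_succ rf_proj; simp)+

lemma rf_pred1: "rf 1 (\<lambda>e. e!0 - 1)"
proof (rule rf_rec[where B="\<lambda>e. 0" and S="\<lambda>e. e!0" and C="\<lambda>e. e!0"])
  fix e :: "nat list"
  have "primH (\<lambda>e. 0) (\<lambda>e. e!0) i e = i - 1" for i by (induction i) auto
  then show "primH (\<lambda>e. 0) (\<lambda>e. e!0) (e!0) e = e!0 - 1" .
qed (intro rf_zero rf_proj; simp)+

lemma rf_pred: "rf n A \<Longrightarrow> rf n (\<lambda>e. A e - 1)"
  by (rule rf_op1[OF rf_pred1])

lemma rf_sub2: "rf 2 (\<lambda>e. e!0 - e!1)"
proof (rule rf_rec[where B="\<lambda>e. e!0" and S="\<lambda>e. e!1 - 1" and C="\<lambda>e. e!1"])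
  fix e :: "nat list"
  have "primH (\<lambda>e. e!0) (\<lambda>e. e!1 - 1) i e = e!0 - i" for i by (induction i) auto
  then show "primH (\<lambda>e. e!0) (\<lambda>e. e!1 - 1) (e!1) e = e!0 - e!1" .
qed (intro rf_pred rf_proj; simp)+

lemma rf_add: "rf n A \<Longrightarrow> rf n B \<Longrightarrow> rf n (\<lambda>e. A e + B e)"
  by (rule rf_op2[OF rf_add2])
lemma rf_sub: "rf n A \<Longrightarrow> rf n B \<Longrightarrow> rf n (\<lambda>e. A e - B e)"
  by (rule rf_op2[OF rf_sub2])

lemma rf_mult2: "rf 2 (\<lambda>e. e!0 * e!1)"
proof (rule rf_rec[where B="\<lambda>e. 0" and S="\<lambda>e. e!1 + e!3" and C="\<lambda>e. e!0"])
  fix e :: "nat list"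
  have "primH (\<lambda>e. 0) (\<lambda>e. e!1 + e!3) i e = i * e!1" for i by (induction i) auto
  then show "primH (\<lambda>e. 0) (\<lambda>e. e!1 + e!3) (e!0) e = e!0 * e!1" .
qed (intro rf_add rf_zero rf_proj; simp)+

lemma rf_mult: "rf n A \<Longrightarrow> rf n B \<Longrightarrow> rf n (\<lambda>e. A e * B e)"
  by (rule rf_op2[OF rf_mult2])

definition rfp :: "nat \<Rightarrow> (nat list \<Rightarrow> bool) \<Rightarrow> bool" where
  "rfp n P \<longleftrightarrow> rf n (\<lambda>e. if P e then 1 else 0)"

lemma rfp_eq: assumes "rf n A" "rf n B" shows "rfp n (\<lambda>e. A e = B e)"
  unfolding rfp_def
  by (rule rf_ext[where F="\<lambda>e. 1 - ((A e - B e) + (B e - A e))"], (intro rf_sub rf_add rf_const assms), simp)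

lemma rfp_less: assumes "rf n A" "rf n B" shows "rfp n (\<lambda>e. A e < B e)"
  unfolding rfp_def
  by (rule rf_ext[where F="\<lambda>e. 1 - (1 - (B e - A e))"], (intro rf_sub rf_const assms), simp)

lemma rfp_le: assumes "rf n A" "rf n B" shows "rfp n (\<lambda>e. A e \<le> B e)"
proof -
  have "rfp n (\<lambda>e. A e < Suc (B e))" by (intro rfp_less rf_succ assms)
  then show ?thesis by (simp add: less_Suc_eq_le)
qed

lemma rfp_not: assumes "rfp n P" shows "rfp n (\<lambda>e. \<not> P e)"
  using assms unfolding rfp_def
  by - (rule rf_ext[where F="\<lambda>e. 1 - (if P e then 1 else 0)"], (intro rf_sub rf_const; assumption), simp)

lemma rfp_conj: assumes "rfp n P" "rfp n Q" shows "rfp n (\<lambda>e. P e \<and> Q e)"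
  using assms unfolding rfp_def
  by - (rule rf_ext[where F="\<lambda>e. (if P e then 1 else 0) * (if Q e then 1 else 0)"], (intro rf_mult; assumption), simp)

lemma rfp_disj: assumes "rfp n P" "rfp n Q" shows "rfp n (\<lambda>e. P e \<or> Q e)"
  using assms unfolding rfp_def
  by - (rule rf_ext[where F="\<lambda>e. 1 - (1 - (if P e then 1 else 0)) * (1 - (if Q e then 1 else 0))"],
     (intro rf_mult rf_sub rf_const; assumption), simp)

lemma rfp_imp: assumes "rfp n P" "rfp n Q" shows "rfp n (\<lambda>e. P e \<longrightarrow> Q e)"
proof -
  have "rfp n (\<lambda>e. \<not> P e \<or> Q e)" by (intro rfp_disj rfp_not assms)
  then show ?thesis by simp
qed

lemma rfp_const: "rfp n (\<lambda>e. b)"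
  unfolding rfp_def by (cases b) (simp_all add: rf_const)

lemma rf_if: assumes "rfp n P" "rf n A" "rf n B" shows "rf n (\<lambda>e. if P e then A e else B e)"
  using assms unfolding rfp_def
  by - (rule rf_ext[where F="\<lambda>e. (if P e then 1 else 0) * A e + (1 - (if P e then 1 else 0)) * B e"],
     (intro rf_mult rf_sub rf_add rf_const; assumption), simp)

lemma rf_shift2:
  assumes "rf (Suc n) P"
  shows "rf (Suc (Suc n)) (\<lambda>e. P (e!0 # drop 2 e))"
proof -
  let ?Fs = "(\<lambda>e. e!0) # map (\<lambda>j e. e!(j+2)) [0..<n]"
  have "rf (Suc (Suc n)) (\<lambda>e. P (map (\<lambda>F. F e) ?Fs))"
    by (rule rf_comp) (auto intro: rf_proj assms)
  then show ?thesis
  proof (rule rf_ext)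
    fix e :: "nat list" assume "length e = Suc (Suc n)"
    then have "map (\<lambda>j. e!(j+2)) [0..<n] = drop 2 e"
      by (intro nth_equalityI) (auto simp: add.commute)
    then show "P (map (\<lambda>F. F e) ?Fs) = P (e!0 # drop 2 e)" by (simp add: comp_def)
  qed
qed

lemma rf_bsum: assumes "rf (Suc n) P" "rf n Bd" shows "rf n (\<lambda>e. \<Sum>i<Bd e. P (i # e))"
proof (rule rf_rec[where B="\<lambda>e. 0" and S="\<lambda>e. e!1 + P (e!0 # drop 2 e)" and C=Bd])
  show "rf (Suc (Suc n)) (\<lambda>e. e!1 + P (e!0 # drop 2 e))"
    by (intro rf_add rf_shift2 assms(1) rf_proj) simp
  fix e :: "nat list"
  have "primH (\<lambda>e. 0) (\<lambda>e. e!1 + P (e!0 # drop 2 e)) k e = (\<Sum>i<k. P (i # e))" for k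
    by (induction k) auto
  then show "primH (\<lambda>e. 0) (\<lambda>e. e!1 + P (e!0 # drop 2 e)) (Bd e) e = (\<Sum>i<Bd e. P (i # e))" .
qed (fact rf_zero assms)+

lemma sum_ind_pos: "(\<Sum>i<(b::nat). if P i then 1 else (0::nat)) = 0 \<longleftrightarrow> (\<forall>i<b. \<not> P i)"
  by (subst sum_nonneg_eq_0_iff) auto

lemma rfp_bex: assumes "rfp (Suc n) P" "rf n Bd" shows "rfp n (\<lambda>e. \<exists>i<Bd e. P (i # e))"
proof -
  have "rf n (\<lambda>e. 1 - (1 - (\<Sum>i<Bd e. (\<lambda>e'. if P e' then 1 else 0) (i # e))))"
    by (intro rf_sub rf_const rf_bsum assms(2) assms(1)[unfolded rfp_def])
  then show ?thesis unfolding rfp_def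
  proof (rule rf_ext)
    fix e :: "nat list"
    show "1 - (1 - (\<Sum>i<Bd e. (\<lambda>e'. if P e' then 1 else 0) (i # e))) = (if \<exists>i<Bd e. P (i # e) then 1 else (0::nat))"
    proof (cases "\<exists>i<Bd e. P (i # e)")
      case True
      then have "(\<Sum>i<Bd e. (if P (i # e) then 1 else (0::nat))) \<noteq> 0"
        using sum_ind_pos[where b="Bd e" and P="\<lambda>i. P (i # e)"] by blast
      moreover have aux: "\<And>s::nat. s \<noteq> 0 \<Longrightarrow> 1 - (1 - s) = 1" by simp
      ultimately show ?thesis by (simp only: if_P[OF True] aux)
    next
      case False
      then have "(\<Sum>i<Bd e. (if P (i # e) then 1 else (0::nat))) = 0"
        using sum_ind_pos[where b="Bd e" and P="\<lambda>i. P (i # e)"] by blast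
      then show ?thesis using False by simp
    qed
  qed
qed

lemma rfp_ball: assumes "rfp (Suc n) P" "rf n Bd" shows "rfp n (\<lambda>e. \<forall>i<Bd e. P (i # e))"
proof -
  have "rfp n (\<lambda>e. \<not> (\<exists>i<Bd e. \<not> P (i # e)))"
    by (intro rfp_not rfp_bex rfp_not assms)
  then show ?thesis by simp
qed

lemma rf_card: assumes "rfp (Suc n) P" "rf n Bd" shows "rf n (\<lambda>e. card {i. i < Bd e \<and> P (i # e)})"
proof -
  have "rf n (\<lambda>e. \<Sum>i<Bd e. (\<lambda>e'. if P e' then 1 else 0) (i # e))"
    by (intro rf_bsum assms(2) assms(1)[unfolded rfp_def])
  then show ?thesis
  proof (rule rf_ext)
    fix e :: "nat list"
    have "(\<Sum>i<Bd e. (if P (i # e) then 1 else (0::nat))) = card {i \<in> {..<Bd e}. P (i # e)}"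
      by (simp add: sum.If_cases Int_def)
    also have "{i \<in> {..<Bd e}. P (i # e)} = {i. i < Bd e \<and> P (i # e)}" by auto
    finally show "(\<Sum>i<Bd e. (\<lambda>e'. if P e' then 1 else (0::nat)) (i # e)) = card {i. i < Bd e \<and> P (i # e)}" by simp
  qed
qed

lemma rf_tl0: "j < n \<Longrightarrow> rf (Suc n) (\<lambda>e. tl e ! j)"
  by (rule rf_ext[OF rf_proj[of "Suc j"]]) (auto simp: nth_tl)
lemma rf_tl1: "j < n \<Longrightarrow> rf (Suc (Suc n)) (\<lambda>e. tl (tl e) ! j)"
  by (rule rf_ext[OF rf_proj[of "Suc (Suc j)"]]) (auto simp: nth_tl)
lemma rf_tl2: "j < n \<Longrightarrow> rf (Suc (Suc (Suc n))) (\<lambda>e. tl (tl (tl e)) ! j)"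
  by (rule rf_ext[OF rf_proj[of "Suc (Suc (Suc j))"]]) (auto simp: nth_tl)
lemma rf_hd0: "rf (Suc n) (\<lambda>e. e ! 0)" by (rule rf_proj) simp
lemma rf_hd1: "rf (Suc (Suc n)) (\<lambda>e. tl e ! 0)" by (rule rf_tl0) simp
lemma rf_hd2: "rf (Suc (Suc (Suc n))) (\<lambda>e. tl (tl e) ! 0)" by (rule rf_tl1) simp

lemma rf_tl: assumes "rf n A" shows "rf (Suc n) (\<lambda>e. A (tl e))"
proof -
  have "rf (Suc n) (\<lambda>e. A (map (\<lambda>F. F e) (map (\<lambda>j e. e!(Suc j)) [0..<n])))"
    by (rule rf_comp) (auto intro: rf_proj assms)
  then show ?thesis
  proof (rule rf_ext)
    fix e :: "nat list" assume "length e = Suc n"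
    then have "map (\<lambda>j. e!(Suc j)) [0..<n] = tl e"
      by (intro nth_equalityI) (auto simp: nth_tl)
    then show "A (map (\<lambda>F. F e) (map (\<lambda>j e. e!(Suc j)) [0..<n])) = A (tl e)" by (simp add: comp_def)
  qed
qed

lemma rf_sumQ: "rf (Suc n) (\<lambda>e. Q (e!0) (tl e)) \<Longrightarrow> rf n Bd \<Longrightarrow> rf n (\<lambda>e. \<Sum>i<Bd e. Q i e)"
  using rf_bsum[of n "\<lambda>e. Q (e!0) (tl e)" Bd] by simp
lemma rfp_exQ: "rfp (Suc n) (\<lambda>e. Q (e!0) (tl e)) \<Longrightarrow> rf n Bd \<Longrightarrow> rfp n (\<lambda>e. \<exists>i<Bd e. Q i e)"
  using rfp_bex[of n "\<lambda>e. Q (e!0) (tl e)" Bd] by simp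
lemma rfp_allQ: "rfp (Suc n) (\<lambda>e. Q (e!0) (tl e)) \<Longrightarrow> rf n Bd \<Longrightarrow> rfp n (\<lambda>e. \<forall>i<Bd e. Q i e)"
  using rfp_ball[of n "\<lambda>e. Q (e!0) (tl e)" Bd] by simp
lemma rf_cardQ: "rfp (Suc n) (\<lambda>e. Q (e!0) (tl e)) \<Longrightarrow> rf n Bd \<Longrightarrow> rf n (\<lambda>e. card {i. i < Bd e \<and> Q i e})"
  using rf_card[of n "\<lambda>e. Q (e!0) (tl e)" Bd] by simp

lemma rfp_op1: "rfp 1 (\<lambda>e. P (e!0)) \<Longrightarrow> rf n A \<Longrightarrow> rfp n (\<lambda>e. P (A e))"
  unfolding rfp_def by (rule rf_op1[where g="\<lambda>x. if P x then 1 else 0"])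
lemma rfp_op2: "rfp 2 (\<lambda>e. P (e!0) (e!1)) \<Longrightarrow> rf n A \<Longrightarrow> rf n B \<Longrightarrow> rfp n (\<lambda>e. P (A e) (B e))"
  unfolding rfp_def by (rule rf_op2[where g="\<lambda>x y. if P x y then 1 else 0"])
lemma rfp_op3: "rfp 3 (\<lambda>e. P (e!0) (e!1) (e!2)) \<Longrightarrow> rf n A \<Longrightarrow> rf n B \<Longrightarrow> rf n C \<Longrightarrow> rfp n (\<lambda>e. P (A e) (B e) (C e))"
  unfolding rfp_def by (rule rf_op3[where g="\<lambda>x y z. if P x y z then 1 else 0"])

lemmas rf_basic = rf_add rf_sub rf_mult rf_succ rf_pred rf_const rf_if
  rfp_eq rfp_less rfp_le rfp_not rfp_conj rfp_disj rfp_imp rfp_const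
  rf_sumQ rfp_exQ rfp_allQ rf_cardQ rf_hd0 rf_hd1 rf_hd2 rf_tl0 rf_tl1 rf_tl2 rf_proj


lemma rf_triangle1: "rf 1 (\<lambda>e. triangle (e!0))"
proof (rule rf_rec[where B="\<lambda>e. 0" and S="\<lambda>e. e!1 + Suc (e!0)" and C="\<lambda>e. e!0"])
  fix e :: "nat list"
  have "primH (\<lambda>e. 0) (\<lambda>e. e!1 + Suc (e!0)) i e = triangle i" for i by (induction i) auto
  then show "primH (\<lambda>e. 0) (\<lambda>e. e!1 + Suc (e!0)) (e!0) e = triangle (e!0)" .
qed (intro rf_zero rf_add rf_succ rf_proj; simp)+

lemma rf_triangle: "rf n A \<Longrightarrow> rf n (\<lambda>e. triangle (A e))"
  by (rule rf_op1[OF rf_triangle1])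

lemma rf_penc2: "rf 2 (\<lambda>e. prod_encode (e!0, e!1))"
  unfolding prod_encode_def by (simp, intro rf_add rf_triangle rf_proj; simp)

lemma rf_penc: "rf n A \<Longrightarrow> rf n B \<Longrightarrow> rf n (\<lambda>e. prod_encode (A e, B e))"
  using rf_op2[OF rf_penc2] .

definition fstd :: "nat \<Rightarrow> nat" where "fstd z = fst (prod_decode z)"
definition sndd :: "nat \<Rightarrow> nat" where "sndd z = snd (prod_decode z)"

lemma fstd_enc[simp]: "fstd (prod_encode (a, b)) = a" by (simp add: fstd_def)
lemma sndd_enc[simp]: "sndd (prod_encode (a, b)) = b" by (simp add: sndd_def)
lemma enc_fstd_sndd: "prod_encode (fstd z, sndd z) = z"
  by (simp add: fstd_def sndd_def)
lemma fstd_le: "fstd z \<le> z" by (metis enc_fstd_sndd le_prod_encode_1)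
lemma sndd_le: "sndd z \<le> z" by (metis enc_fstd_sndd le_prod_encode_2)

lemma pex_iff: "(\<exists>b<Suc z. prod_encode (a, b) = z) \<longleftrightarrow> a = fstd z"
proof
  assume "\<exists>b<Suc z. prod_encode (a, b) = z"
  then obtain b where "prod_encode (a, b) = z" by blast
  then show "a = fstd z" by (metis fstd_enc)
next
  assume "a = fstd z"
  then show "\<exists>b<Suc z. prod_encode (a, b) = z"
    using enc_fstd_sndd[of z] sndd_le[of z] by (intro exI[of _ "sndd z"]) auto
qed

lemma pex_iff2: "(\<exists>a<Suc z. prod_encode (a, b) = z) \<longleftrightarrow> b = sndd z"
proof
  assume "\<exists>a<Suc z. prod_encode (a, b) = z"
  then obtain a where "prod_encode (a, b) = z" by blast
  then show "b = sndd z" by (metis sndd_enc)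
next
  assume "b = sndd z"
  then show "\<exists>a<Suc z. prod_encode (a, b) = z"
    using enc_fstd_sndd[of z] fstd_le[of z] by (intro exI[of _ "fstd z"]) auto
qed

lemma rf_fstd1: "rf 1 (\<lambda>e. fstd (e!0))"
proof -
  have "rf 1 (\<lambda>e. \<Sum>a<Suc (e!0). a * (if \<exists>b<Suc (e!0). prod_encode (a, b) = e!0 then 1 else 0))"
    by (intro rf_basic rf_penc rf_if; simp)
  then show ?thesis
  proof (rule rf_ext)
    fix e :: "nat list"
    let ?z = "e!0"
    have "(\<Sum>a<Suc ?z. a * (if \<exists>b<Suc ?z. prod_encode (a, b) = ?z then 1 else 0))
        = (\<Sum>a<Suc ?z. (if a = fstd ?z then a else 0))"
      by (intro sum.cong) (auto simp: pex_iff)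
    also have "\<dots> = fstd ?z" using fstd_le[of ?z] by (simp add: sum.delta')
    finally show "(\<Sum>a<Suc ?z. a * (if \<exists>b<Suc ?z. prod_encode (a, b) = ?z then 1 else 0)) = fstd ?z" .
  qed
qed

lemma rf_sndd1: "rf 1 (\<lambda>e. sndd (e!0))"
proof -
  have "rf 1 (\<lambda>e. \<Sum>b<Suc (e!0). b * (if \<exists>a<Suc (e!0). prod_encode (a, b) = e!0 then 1 else 0))"
    by (intro rf_basic rf_penc rf_if; simp)
  then show ?thesis
  proof (rule rf_ext)
    fix e :: "nat list"
    let ?z = "e!0"
    have "(\<Sum>b<Suc ?z. b * (if \<exists>a<Suc ?z. prod_encode (a, b) = ?z then 1 else 0))
        = (\<Sum>b<Suc ?z. (if b = sndd ?z then b else 0))"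
      by (intro sum.cong) (auto simp: pex_iff2)
    also have "\<dots> = sndd ?z" using sndd_le[of ?z] by (simp add: sum.delta')
    finally show "(\<Sum>b<Suc ?z. b * (if \<exists>a<Suc ?z. prod_encode (a, b) = ?z then 1 else 0)) = sndd ?z" .
  qed
qed

lemma rf_fstd: "rf n A \<Longrightarrow> rf n (\<lambda>e. fstd (A e))" by (rule rf_op1[OF rf_fstd1])
lemma rf_sndd: "rf n A \<Longrightarrow> rf n (\<lambda>e. sndd (A e))" by (rule rf_op1[OF rf_sndd1])


definition hdc :: "nat \<Rightarrow> nat" where "hdc l = fstd (l - 1)"
definition tlc :: "nat \<Rightarrow> nat" where "tlc l = sndd (l - 1)"
definition consc :: "nat \<Rightarrow> nat \<Rightarrow> nat" where "consc a l = Suc (prod_encode (a, l))"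
definition nthc :: "nat \<Rightarrow> nat \<Rightarrow> nat" where "nthc l i = hdc ((tlc ^^ i) l)"
definition lenc :: "nat \<Rightarrow> nat" where "lenc l = card {i. i < l \<and> (tlc ^^ i) l \<noteq> 0}"

lemma rf_hdc: "rf n A \<Longrightarrow> rf n (\<lambda>e. hdc (A e))"
  unfolding hdc_def by (intro rf_fstd rf_pred)
lemma rf_tlc: "rf n A \<Longrightarrow> rf n (\<lambda>e. tlc (A e))"
  unfolding tlc_def by (intro rf_sndd rf_pred)
lemma rf_consc: "rf n A \<Longrightarrow> rf n B \<Longrightarrow> rf n (\<lambda>e. consc (A e) (B e))"
  unfolding consc_def by (intro rf_succ rf_penc)

lemma rf_tlpow2: "rf 2 (\<lambda>e. (tlc ^^ (e!0)) (e!1))"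
proof (rule rf_rec[where B="\<lambda>e. e!1" and S="\<lambda>e. tlc (e!1)" and C="\<lambda>e. e!0"])
  fix e :: "nat list"
  have "primH (\<lambda>e. e!1) (\<lambda>e. tlc (e!1)) i e = (tlc ^^ i) (e!1)" for i by (induction i) auto
  then show "primH (\<lambda>e. e!1) (\<lambda>e. tlc (e!1)) (e!0) e = (tlc ^^ (e!0)) (e!1)" .
qed (intro rf_tlc rf_proj; simp)+

lemma rf_tlpow: "rf n A \<Longrightarrow> rf n B \<Longrightarrow> rf n (\<lambda>e. (tlc ^^ (A e)) (B e))"
  by (rule rf_op2[OF rf_tlpow2])

lemma rf_nthc: "rf n A \<Longrightarrow> rf n B \<Longrightarrow> rf n (\<lambda>e. nthc (A e) (B e))"
  unfolding nthc_def by (intro rf_hdc rf_tlpow)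

lemma rf_lenc: "rf n A \<Longrightarrow> rf n (\<lambda>e. lenc (A e))"
  unfolding lenc_def by (intro rf_basic rf_tlpow rf_tl; assumption?)

lemma tlc_0[simp]: "tlc 0 = 0"
  by (simp add: tlc_def sndd_def prod_decode_def prod_decode_aux.simps)
lemma tlc_enc[simp]: "tlc (Suc (prod_encode (x, y))) = y"
  by (simp add: tlc_def)
lemma hdc_enc[simp]: "hdc (Suc (prod_encode (x, y))) = x"
  by (simp add: hdc_def)
lemma tlpow_0[simp]: "(tlc ^^ i) 0 = 0"
  by (induction i) auto
lemma consc_enc[simp]: "consc x (list_encode xs) = list_encode (x # xs)"
  by (simp add: consc_def)

lemma tlpow_enc: "(tlc ^^ i) (list_encode xs) = list_encode (drop i xs)"
proof (induction i arbitrary: xs)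
  case (Suc i)
  then show ?case by (cases xs) (simp_all add: funpow_swap1)
qed simp

lemma nthc_enc[simp]: "i < length xs \<Longrightarrow> nthc (list_encode xs) i = xs ! i"
  unfolding nthc_def tlpow_enc by (simp add: hd_drop_conv_nth Cons_nth_drop_Suc[symmetric])

lemma length_le_enc: "length xs \<le> list_encode xs"
proof (induction xs)
  case (Cons x xs)
  then show ?case using le_prod_encode_2[of "list_encode xs" x] by simp
qed simp

lemma enc_eq_0[simp]: "list_encode xs = 0 \<longleftrightarrow> xs = []"
  by (cases xs) auto

lemma lenc_enc[simp]: "lenc (list_encode xs) = length xs"
proof -
  have "{i. i < list_encode xs \<and> (tlc ^^ i) (list_encode xs) \<noteq> 0} = {..<length xs}"
    using length_le_enc[of xs] by (auto simp: tlpow_enc)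
  then show ?thesis unfolding lenc_def by simp
qed

fun code :: "recf \<Rightarrow> nat" where
  "code Zero = prod_encode (0, 0)"
| "code Succ = prod_encode (1, 0)"
| "code (Proj i) = prod_encode (2, i)"
| "code (Comp f gs) = prod_encode (3, prod_encode (code f, list_encode (map code gs)))"
| "code (Prim f g) = prod_encode (4, prod_encode (code f, code g))"
| "code (Mn f) = prod_encode (5, code f)"


type_synonym jdg = "nat \<times> nat list \<times> nat"

definition justH :: "jdg list \<Rightarrow> jdg \<Rightarrow> bool" where
"justH E J \<longleftrightarrow> (case J of (c, xs, y) \<Rightarrow>
   (fstd c = 0 \<and> y = 0) \<or>
   (fstd c = 1 \<and> xs \<noteq> [] \<and> y = Suc (hd xs)) \<or>
   (fstd c = 2 \<and> sndd c < length xs \<and> y = xs ! sndd c) \<or>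
   (fstd c = 3 \<and> (\<exists>ys. (fstd (sndd c), ys, y) \<in> set E \<and> length ys = length (list_decode (sndd (sndd c))) \<and>
        (\<forall>i<length ys. (list_decode (sndd (sndd c)) ! i, xs, ys ! i) \<in> set E))) \<or>
   (fstd c = 4 \<and> xs \<noteq> [] \<and> ((hd xs = 0 \<and> (fstd (sndd c), tl xs, y) \<in> set E) \<or>
        (hd xs \<noteq> 0 \<and> (\<exists>w. (c, (hd xs - 1) # tl xs, w) \<in> set E \<and> (sndd (sndd c), (hd xs - 1) # w # tl xs, y) \<in> set E)))) \<or>
   (fstd c = 5 \<and> (sndd c, y # xs, 0) \<in> set E \<and> (\<forall>m<y. \<exists>k. (sndd c, m # xs, Suc k) \<in> set E)))"

definition validH :: "jdg list \<Rightarrow> bool" where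
  "validH cs \<longleftrightarrow> (\<forall>j<length cs. justH (take j cs) (cs ! j))"

lemma in_take_nth: "J \<in> set (take j cs) \<Longrightarrow> \<exists>k<j. k < length cs \<and> cs ! k = J"
  by (auto simp: in_set_conv_nth)

lemma validH_sound:
  assumes "validH cs"
  shows "j < length cs \<Longrightarrow> cs ! j = (c, xs, y) \<Longrightarrow> code f = c \<Longrightarrow> eval f xs y"
proof (induction j arbitrary: f c xs y rule: less_induct)
  case (less j)
  have IH: "eval f' xs' y'" if "(c', xs', y') \<in> set (take j cs)" "code f' = c'" for f' c' xs' y'
  proof -
    from in_take_nth[OF that(1)] obtain k where "k < j" "k < length cs" "cs ! k = (c', xs', y')" by blast
    then show ?thesis using less.IH that(2) by blast
  qed
  have J: "justH (take j cs) (c, xs, y)"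
    using assms less.prems(1,2) unfolding validH_def by metis
  show ?case
  proof (cases f)
    case Zero
    with J less.prems(3) show ?thesis by (auto simp: justH_def intro: eval.zero)
  next
    case Succ
    with J less.prems(3) have "xs \<noteq> [] \<and> y = Suc (hd xs)" by (auto simp: justH_def)
    then show ?thesis using Succ by (cases xs) (auto intro: eval.succ)
  next
    case (Proj i)
    with J less.prems(3) have "i < length xs \<and> y = xs ! i" by (auto simp: justH_def)
    then show ?thesis using Proj by (auto intro: eval.proj)
  next
    case (Comp g gs)
    with J less.prems(3) obtain ys where ys: "(code g, ys, y) \<in> set (take j cs)"
      "length ys = length gs" "\<forall>i<length ys. (code (gs ! i), xs, ys ! i) \<in> set (take j cs)"
      by (auto simp: justH_def)
    have "list_all2 (\<lambda>g y. eval g xs y) gs ys"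
      using ys(2,3) IH by (auto simp: list_all2_conv_all_nth)
    moreover have "eval g ys y" using IH ys(1) by blast
    ultimately show ?thesis using Comp by (auto intro: eval.comp)
  next
    case (Prim g h)
    have c: "fstd c = 4" "fstd (sndd c) = code g" "sndd (sndd c) = code h"
      using Prim less.prems(3) by auto
    have r0: "xs \<noteq> [] \<and> ((hd xs = 0 \<and> (code g, tl xs, y) \<in> set (take j cs)) \<or>
        (hd xs \<noteq> 0 \<and> (\<exists>w. (c, (hd xs - 1) # tl xs, w) \<in> set (take j cs) \<and> (code h, (hd xs - 1) # w # tl xs, y) \<in> set (take j cs))))"
      using J c by (simp add: justH_def)
    then obtain n xs' where xs: "xs = n # xs'" by (cases xs) auto
    with r0 have r: "(n = 0 \<and> (code g, xs', y) \<in> set (take j cs)) \<or>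
        (n \<noteq> 0 \<and> (\<exists>w. (c, (n - 1) # xs', w) \<in> set (take j cs) \<and> (code h, (n - 1) # w # xs', y) \<in> set (take j cs)))"
      by simp
    show ?thesis
    proof (cases n)
      case 0
      with r have "eval g xs' y" using IH by blast
      then show ?thesis using Prim xs 0 by (auto intro: eval.prim0)
    next
      case (Suc n')
      with r obtain w where "(c, n' # xs', w) \<in> set (take j cs)" "(code h, n' # w # xs', y) \<in> set (take j cs)"
        by auto
      then have "eval (Prim g h) (n' # xs') w" "eval h (n' # w # xs') y"
        using IH Prim less.prems(3) by blast+
      then show ?thesis using Prim xs Suc by (auto intro: eval.primS)
    qed
  next
    case (Mn g)
    with J less.prems(3) have r: "(code g, y # xs, 0) \<in> set (take j cs)" "\<forall>m<y. \<exists>k. (code g, m # xs, Suc k) \<in> set (take j cs)"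
      by (auto simp: justH_def)
    have "eval g (y # xs) 0" using IH r(1) by blast
    moreover have "\<forall>m<y. \<exists>k. eval g (m # xs) (Suc k)" using IH r(2) by blast
    ultimately show ?thesis using Mn by (auto intro: eval.mu)
  qed
qed

lemma justH_mono: "justH E J \<Longrightarrow> set E \<subseteq> set E' \<Longrightarrow> justH E' J"
  unfolding justH_def by (cases J) (simp, blast)

lemma validH_append: assumes "validH cs1" "validH cs2" shows "validH (cs1 @ cs2)"
  unfolding validH_def
proof (intro allI impI)
  fix j assume j: "j < length (cs1 @ cs2)"
  show "justH (take j (cs1 @ cs2)) ((cs1 @ cs2) ! j)"
  proof (cases "j < length cs1")
    case True
    then show ?thesis using assms(1) unfolding validH_def by (simp add: nth_append)
  next
    case False
    define j' where "j' = j - length cs1"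
    have "j' < length cs2" using j False j'_def by simp
    then have "justH (take j' cs2) (cs2 ! j')" using assms(2) unfolding validH_def by blast
    moreover have "set (take j' cs2) \<subseteq> set (take j (cs1 @ cs2))" using False j'_def by auto
    ultimately show ?thesis using False j'_def by (auto simp: nth_append intro: justH_mono)
  qed
qed

lemma validH_snoc: assumes "validH cs" "justH cs J" shows "validH (cs @ [J])"
  unfolding validH_def
proof (intro allI impI)
  fix j assume j: "j < length (cs @ [J])"
  show "justH (take j (cs @ [J])) ((cs @ [J]) ! j)"
  proof (cases "j < length cs")
    case True
    then show ?thesis using assms(1) unfolding validH_def by (simp add: nth_append)
  next
    case False
    then have "j = length cs" using j by simp
    then show ?thesis using assms(2) by simp
  qed
qed

lemma validH_Nil: "validH []" by (simp add: validH_def)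

lemma combine_list:
  "list_all2 (\<lambda>g y. \<exists>cs. validH cs \<and> (code g, xs, y) \<in> set cs) gs ys \<Longrightarrow>
   \<exists>cs. validH cs \<and> (\<forall>i<length gs. (code (gs ! i), xs, ys ! i) \<in> set cs)"
proof (induction rule: list_all2_induct)
  case Nil then show ?case using validH_Nil by auto
next
  case (Cons g gs y ys)
  from Cons.hyps(1) obtain cs1 where 1: "validH cs1" "(code g, xs, y) \<in> set cs1" by blast
  from Cons.IH obtain cs2 where 2: "validH cs2" "\<forall>i<length gs. (code (gs ! i), xs, ys ! i) \<in> set cs2" by blast
  have "\<forall>i<length (g # gs). (code ((g # gs) ! i), xs, (y # ys) ! i) \<in> set (cs1 @ cs2)"
  proof (intro allI impI)
    fix i assume "i < length (g # gs)"
    then show "(code ((g # gs) ! i), xs, (y # ys) ! i) \<in> set (cs1 @ cs2)"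
      using 1 2 by (cases i) auto
  qed
  then show ?case using validH_append[OF 1(1) 2(1)] by blast
qed

lemma combine_nat:
  "\<forall>m<n. \<exists>k cs. validH cs \<and> (a, m # xs, Suc k) \<in> set cs \<Longrightarrow>
   \<exists>cs. validH cs \<and> (\<forall>m<n. \<exists>k. (a, m # xs, Suc k) \<in> set cs)"
proof (induction n)
  case 0 then show ?case using validH_Nil by auto
next
  case (Suc n)
  then obtain cs1 where 1: "validH cs1" "\<forall>m<n. \<exists>k. (a, m # xs, Suc k) \<in> set cs1" by auto
  from Suc.prems obtain k cs2 where 2: "validH cs2" "(a, n # xs, Suc k) \<in> set cs2" by blast
  have "\<forall>m<Suc n. \<exists>k. (a, m # xs, Suc k) \<in> set (cs1 @ cs2)"
    using 1(2) 2(2) by (auto simp: less_Suc_eq)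
  then show ?case using validH_append[OF 1(1) 2(1)] by blast
qed

lemma validH_complete: "eval f xs y \<Longrightarrow> \<exists>cs. validH cs \<and> (code f, xs, y) \<in> set cs"
proof (induction rule: eval.induct)
  case (zero xs)
  have "validH ([] @ [(code Zero, xs, 0)])" by (rule validH_snoc[OF validH_Nil]) (simp add: justH_def)
  then show ?case by auto
next
  case (succ x xs)
  have "validH ([] @ [(code Succ, x # xs, Suc x)])" by (rule validH_snoc[OF validH_Nil]) (simp add: justH_def)
  then show ?case by auto
next
  case (proj i xs)
  have "validH ([] @ [(code (Proj i), xs, xs ! i)])" by (rule validH_snoc[OF validH_Nil]) (simp add: justH_def proj)
  then show ?case by auto
next
  case (comp xs gs ys f z)
  have "list_all2 (\<lambda>g y. \<exists>cs. validH cs \<and> (code g, xs, y) \<in> set cs) gs ys"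
    using comp.IH(1) by (rule list_all2_mono) blast
  from combine_list[OF this] obtain cs1 where 1: "validH cs1" "\<forall>i<length gs. (code (gs ! i), xs, ys ! i) \<in> set cs1" by blast
  from comp.IH(2) obtain cs2 where 2: "validH cs2" "(code f, ys, z) \<in> set cs2" by blast
  have len: "length ys = length gs" using comp.IH(1) by (simp add: list_all2_lengthD)
  have "justH (cs1 @ cs2) (code (Comp f gs), xs, z)"
    unfolding justH_def using 1(2) 2(2) len by (simp, intro exI[of _ ys]) auto
  then have "validH ((cs1 @ cs2) @ [(code (Comp f gs), xs, z)])"
    by (intro validH_snoc validH_append 1(1) 2(1))
  then show ?case by auto
next
  case (prim0 f xs z g)
  from prim0.IH obtain cs where 1: "validH cs" "(code f, xs, z) \<in> set cs" by blast
  have "justH cs (code (Prim f g), 0 # xs, z)" unfolding justH_def using 1(2) by simp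
  then have "validH (cs @ [(code (Prim f g), 0 # xs, z)])" by (intro validH_snoc 1(1))
  then show ?case by auto
next
  case (primS f g n xs y z)
  from primS.IH(1) obtain cs1 where 1: "validH cs1" "(code (Prim f g), n # xs, y) \<in> set cs1" by blast
  from primS.IH(2) obtain cs2 where 2: "validH cs2" "(code g, n # y # xs, z) \<in> set cs2" by blast
  have "justH (cs1 @ cs2) (code (Prim f g), Suc n # xs, z)"
    unfolding justH_def using 1(2) 2(2) by (simp, intro exI[of _ y]) simp
  then have "validH ((cs1 @ cs2) @ [(code (Prim f g), Suc n # xs, z)])"
    by (intro validH_snoc validH_append 1(1) 2(1))
  then show ?case by auto
next
  case (mu f n xs)
  from mu.IH(1) obtain cs1 where 1: "validH cs1" "(code f, n # xs, 0) \<in> set cs1" by blast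
  have "\<forall>m<n. \<exists>k cs. validH cs \<and> (code f, m # xs, Suc k) \<in> set cs" using mu.IH(2) by blast
  from combine_nat[OF this] obtain cs2 where 2: "validH cs2" "\<forall>m<n. \<exists>k. (code f, m # xs, Suc k) \<in> set cs2" by blast
  have "justH (cs1 @ cs2) (code (Mn f), xs, n)"
    unfolding justH_def using 1(2) 2(2) by (simp; blast)
  then have "validH ((cs1 @ cs2) @ [(code (Mn f), xs, n)])"
    by (intro validH_snoc validH_append 1(1) 2(1))
  then show ?case by auto
qed


definition fnc :: "nat \<Rightarrow> nat" where "fnc E = fstd E"
definition inc :: "nat \<Rightarrow> nat" where "inc E = fstd (sndd E)"
definition outc :: "nat \<Rightarrow> nat" where "outc E = sndd (sndd E)"

lemma rf_fnc: "rf n A \<Longrightarrow> rf n (\<lambda>e. fnc (A e))" unfolding fnc_def by (intro rf_fstd)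
lemma rf_inc: "rf n A \<Longrightarrow> rf n (\<lambda>e. inc (A e))" unfolding inc_def by (intro rf_fstd rf_sndd)
lemma rf_outc: "rf n A \<Longrightarrow> rf n (\<lambda>e. outc (A e))" unfolding outc_def by (intro rf_sndd)

lemmas rf_all = rf_basic rf_fstd rf_sndd rf_penc rf_hdc rf_tlc rf_consc rf_nthc rf_lenc rf_fnc rf_inc rf_outc

definition justN' :: "nat \<Rightarrow> nat \<Rightarrow> nat \<Rightarrow> nat \<Rightarrow> nat \<Rightarrow> bool" where
"justN' c l y C j \<longleftrightarrow>
   (fstd c = 0 \<and> y = 0) \<or>
   (fstd c = 1 \<and> l \<noteq> 0 \<and> y = Suc (hdc l)) \<or>
   (fstd c = 2 \<and> sndd c < lenc l \<and> y = nthc l (sndd c)) \<or>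
   (fstd c = 3 \<and> (\<exists>k<j. fnc (nthc C k) = fstd (sndd c) \<and> outc (nthc C k) = y \<and> lenc (inc (nthc C k)) = lenc (sndd (sndd c)) \<and>
        (\<forall>i<lenc (sndd (sndd c)). \<exists>k'<j. nthc C k' = prod_encode (nthc (sndd (sndd c)) i, prod_encode (l, nthc (inc (nthc C k)) i))))) \<or>
   (fstd c = 4 \<and> l \<noteq> 0 \<and> ((hdc l = 0 \<and> (\<exists>k<j. nthc C k = prod_encode (fstd (sndd c), prod_encode (tlc l, y)))) \<or>
        (hdc l \<noteq> 0 \<and> (\<exists>k<j. fnc (nthc C k) = c \<and> inc (nthc C k) = consc (hdc l - 1) (tlc l) \<and>
            (\<exists>k'<j. nthc C k' = prod_encode (sndd (sndd c), prod_encode (consc (hdc l - 1) (consc (outc (nthc C k)) (tlc l)), y))))))) \<or>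
   (fstd c = 5 \<and> (\<exists>k<j. nthc C k = prod_encode (sndd c, prod_encode (consc y l, 0))) \<and>
        (\<forall>m<y. \<exists>k<j. fnc (nthc C k) = sndd c \<and> inc (nthc C k) = consc m l \<and> outc (nthc C k) \<noteq> 0))"

lemma rfp_justN'5: "rfp 5 (\<lambda>e. justN' (e!0) (e!1) (e!2) (e!3) (e!4))"
  unfolding justN'_def by (intro rf_all; simp)

lemma rf_op5:
  assumes "rf 5 (\<lambda>e. g (e!0) (e!1) (e!2) (e!3) (e!4))" "rf n A1" "rf n A2" "rf n A3" "rf n A4" "rf n A5"
  shows "rf n (\<lambda>e. g (A1 e) (A2 e) (A3 e) (A4 e) (A5 e))"
  using rf_comp[of "[A1,A2,A3,A4,A5]" n "\<lambda>e. g (e!0) (e!1) (e!2) (e!3) (e!4)"] assms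
  by (simp add: eval_nat_numeral)

lemma rfp_op5: "rfp 5 (\<lambda>e. P (e!0) (e!1) (e!2) (e!3) (e!4)) \<Longrightarrow> rf n A1 \<Longrightarrow> rf n A2 \<Longrightarrow> rf n A3 \<Longrightarrow> rf n A4 \<Longrightarrow> rf n A5
   \<Longrightarrow> rfp n (\<lambda>e. P (A1 e) (A2 e) (A3 e) (A4 e) (A5 e))"
  unfolding rfp_def by (rule rf_op5[where g="\<lambda>a b c d f. if P a b c d f then 1 else 0"])

definition justN :: "nat \<Rightarrow> nat \<Rightarrow> bool" where
  "justN C j \<longleftrightarrow> justN' (fnc (nthc C j)) (inc (nthc C j)) (outc (nthc C j)) C j"

definition validN :: "nat \<Rightarrow> bool" where
  "validN C \<longleftrightarrow> (\<forall>j<lenc C. justN C j)"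

lemma rfp_justN: "rf n A \<Longrightarrow> rf n B \<Longrightarrow> rfp n (\<lambda>e. justN (A e) (B e))"
  unfolding justN_def by (intro rfp_op5[OF rfp_justN'5] rf_all)

lemma rfp_validN: "rf n A \<Longrightarrow> rfp n (\<lambda>e. validN (A e))"
  unfolding validN_def by (intro rf_all rfp_justN rf_tl; assumption?)

definition good :: "nat \<Rightarrow> nat \<Rightarrow> nat \<Rightarrow> bool" where
  "good w c v \<longleftrightarrow> validN (fstd w) \<and> (\<exists>k<lenc (fstd w). nthc (fstd w) k = prod_encode (c, prod_encode (consc v 0, sndd w)))"

lemma rfp_good3: "rfp 3 (\<lambda>e. good (e!0) (e!1) (e!2))"
  unfolding good_def by (intro rf_all rfp_validN; simp)


definition encE :: "jdg \<Rightarrow> nat" where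
  "encE J = (case J of (c, xs, y) \<Rightarrow> prod_encode (c, prod_encode (list_encode xs, y)))"

definition codeC :: "jdg list \<Rightarrow> nat" where "codeC cs = list_encode (map encE cs)"

lemma nthc_codeC: "k < length cs \<Longrightarrow> nthc (codeC cs) k = encE (cs ! k)"
  unfolding codeC_def by simp

lemma lenc_codeC[simp]: "lenc (codeC cs) = length cs"
  unfolding codeC_def by simp

definition entry :: "jdg list \<Rightarrow> nat \<Rightarrow> jdg" where
  "entry cs k = (if k < length cs then cs ! k else (0, [], 0))"

lemma nthc_codeC'[simp]: "nthc (codeC cs) k = encE (entry cs k)"
proof (cases "k < length cs")
  case True then show ?thesis by (simp add: nthc_codeC entry_def)
next
  case False
  have "(tlc ^^ k) (codeC cs) = 0" unfolding codeC_def tlpow_enc using False by simp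
  have p0: "prod_encode (0, 0) = 0" by (simp add: prod_encode_def)
  have "fstd 0 = 0" using fstd_enc[of 0 0] unfolding p0 .
  then show ?thesis using False \<open>(tlc ^^ k) (codeC cs) = 0\<close>
    by (simp add: nthc_def entry_def encE_def hdc_def p0)
qed

lemma mem_take: assumes "j \<le> length cs" shows "X \<in> set (take j cs) \<longleftrightarrow> (\<exists>k<j. entry cs k = X)"
proof
  assume "X \<in> set (take j cs)"
  then obtain k where "k < length (take j cs)" "take j cs ! k = X" unfolding in_set_conv_nth by blast
  then have "k < j" "entry cs k = X" using assms by (simp_all add: entry_def)
  then show "\<exists>k<j. entry cs k = X" by blast
next
  assume "\<exists>k<j. entry cs k = X"
  then obtain k where "k < j" "entry cs k = X" by blast
  then have "k < length (take j cs)" "take j cs ! k = X" using assms by (simp_all add: entry_def)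
  then show "X \<in> set (take j cs)" unfolding in_set_conv_nth by blast
qed

lemma fnc_encE[simp]: "fnc (encE J) = fst J" by (cases J) (simp add: fnc_def encE_def)
lemma inc_encE[simp]: "inc (encE J) = list_encode (fst (snd J))" by (cases J) (simp add: inc_def encE_def)
lemma outc_encE[simp]: "outc (encE J) = snd (snd J)" by (cases J) (simp add: outc_def encE_def)
lemma encE_eq[simp]: "encE J = prod_encode (a, prod_encode (l, z)) \<longleftrightarrow> J = (a, list_decode l, z)"
proof (cases J)
  case (fields c xs y)
  have "encE J = prod_encode (a, prod_encode (l, z)) \<longleftrightarrow> c = a \<and> list_encode xs = l \<and> y = z"
    unfolding fields encE_def by simp
  also have "\<dots> \<longleftrightarrow> c = a \<and> xs = list_decode l \<and> y = z" by (metis list_encode_inverse list_decode_inverse)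
  finally show ?thesis using fields by simp
qed

lemma d3:
  assumes j: "j \<le> length cs"
  shows "(\<exists>k<j. fnc (nthc (codeC cs) k) = A \<and> outc (nthc (codeC cs) k) = y \<and>
      lenc (inc (nthc (codeC cs) k)) = lenc (list_encode gs) \<and>
      (\<forall>i<lenc (list_encode gs). \<exists>k'<j. nthc (codeC cs) k' = prod_encode (nthc (list_encode gs) i,
          prod_encode (list_encode xs, nthc (inc (nthc (codeC cs) k)) i))))
   \<longleftrightarrow> (\<exists>ys. (A, ys, y) \<in> set (take j cs) \<and> length ys = length gs \<and>
        (\<forall>i<length ys. (gs ! i, xs, ys ! i) \<in> set (take j cs)))" (is "?L \<longleftrightarrow> ?R")
proof
  assume ?L
  then obtain k where k0: "k < j" and k1: "fnc (nthc (codeC cs) k) = A \<and> outc (nthc (codeC cs) k) = y \<and>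
      lenc (inc (nthc (codeC cs) k)) = lenc (list_encode gs) \<and>
      (\<forall>i<lenc (list_encode gs). \<exists>k'<j. nthc (codeC cs) k' = prod_encode (nthc (list_encode gs) i,
          prod_encode (list_encode xs, nthc (inc (nthc (codeC cs) k)) i)))" by blast
  from k1 have k: "k < j" "fst (entry cs k) = A" "snd (snd (entry cs k)) = y"
    "length (fst (snd (entry cs k))) = length gs"
    "\<forall>i<length gs. \<exists>k'<j. encE (entry cs k') = prod_encode (gs ! i,
          prod_encode (list_encode xs, nthc (list_encode (fst (snd (entry cs k)))) i))"
    using k0 unfolding nthc_codeC' fnc_encE outc_encE inc_encE lenc_enc by auto
  define ys where "ys = fst (snd (entry cs k))"
  have "entry cs k = (A, ys, y)" using k(2,3) ys_def by (cases "entry cs k") auto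
  then have 1: "(A, ys, y) \<in> set (take j cs)" using k(1) j mem_take by blast
  have 2: "(gs ! i, xs, ys ! i) \<in> set (take j cs)" if "i < length ys" for i
  proof -
    from that k(4) k(5) obtain k' where "k' < j" "encE (entry cs k') = prod_encode (gs ! i,
          prod_encode (list_encode xs, nthc (list_encode ys) i))" unfolding ys_def by auto
    then have "k' < j" "entry cs k' = (gs ! i, xs, ys ! i)" using that by auto
    then show ?thesis using j mem_take by blast
  qed
  show ?R using 1 2 k(4) ys_def by blast
next
  assume ?R
  then obtain ys where ys: "(A, ys, y) \<in> set (take j cs)" "length ys = length gs"
     "\<forall>i<length ys. (gs ! i, xs, ys ! i) \<in> set (take j cs)" by blast
  from ys(1) obtain k where k: "k < j" "entry cs k = (A, ys, y)" using j mem_take by blast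
  have "\<exists>k'<j. encE (entry cs k') = prod_encode (gs ! i, prod_encode (list_encode xs, nthc (list_encode ys) i))"
    if "i < length gs" for i
  proof -
    from ys(2,3) that obtain k' where "k' < j" "entry cs k' = (gs ! i, xs, ys ! i)" using j mem_take by metis
    then show ?thesis using that ys(2) by auto
  qed
  then show ?L using k ys(2) unfolding nthc_codeC' fnc_encE outc_encE inc_encE lenc_enc by auto
qed

lemma d4a:
  assumes j: "j \<le> length cs"
  shows "(\<exists>k<j. nthc (codeC cs) k = prod_encode (a, prod_encode (list_encode zs, y))) \<longleftrightarrow> (a, zs, y) \<in> set (take j cs)"
  unfolding nthc_codeC' encE_eq list_encode_inverse mem_take[OF j] ..

lemma d4b:
  assumes j: "j \<le> length cs"
  shows "(\<exists>k<j. fnc (nthc (codeC cs) k) = c \<and> inc (nthc (codeC cs) k) = list_encode (u # zs) \<and>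
            (\<exists>k'<j. nthc (codeC cs) k' = prod_encode (b, prod_encode (list_encode (u # outc (nthc (codeC cs) k) # zs), y))))
     \<longleftrightarrow> (\<exists>w. (c, u # zs, w) \<in> set (take j cs) \<and> (b, u # w # zs, y) \<in> set (take j cs))" (is "?L \<longleftrightarrow> ?R")
proof
  assume ?L
  then obtain k k' where "k < j" "fst (entry cs k) = c" "list_encode (fst (snd (entry cs k))) = list_encode (u # zs)"
    "k' < j" "entry cs k' = (b, u # snd (snd (entry cs k)) # zs, y)"
    unfolding nthc_codeC' fnc_encE inc_encE outc_encE encE_eq list_encode_inverse by blast
  then have "entry cs k = (c, u # zs, snd (snd (entry cs k)))" "k < j" "k' < j" "entry cs k' = (b, u # snd (snd (entry cs k)) # zs, y)"
    by (auto simp: list_encode_eq prod_eq_iff simp del: list_encode.simps)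
  then show ?R unfolding mem_take[OF j] by blast
next
  assume ?R
  then obtain w k k' where "k < j" "entry cs k = (c, u # zs, w)" "k' < j" "entry cs k' = (b, u # w # zs, y)"
    unfolding mem_take[OF j] by blast
  then show ?L
    unfolding nthc_codeC' fnc_encE inc_encE outc_encE encE_eq list_encode_inverse
    by (intro exI[of _ k] conjI exI[of _ k']) auto
qed

lemma d5b:
  assumes j: "j \<le> length cs"
  shows "(\<exists>k<j. fnc (nthc (codeC cs) k) = a \<and> inc (nthc (codeC cs) k) = list_encode zs \<and> outc (nthc (codeC cs) k) \<noteq> 0)
     \<longleftrightarrow> (\<exists>k. (a, zs, Suc k) \<in> set (take j cs))" (is "?L \<longleftrightarrow> ?R")
proof
  assume ?L
  then obtain k where "k < j" "fst (entry cs k) = a" "fst (snd (entry cs k)) = zs" "snd (snd (entry cs k)) \<noteq> 0"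
    unfolding nthc_codeC' fnc_encE inc_encE outc_encE list_encode_eq by blast
  then have "k < j" "entry cs k = (a, zs, Suc (snd (snd (entry cs k)) - 1))" by (auto simp: prod_eq_iff)
  then show ?R unfolding mem_take[OF j] by blast
next
  assume ?R
  then obtain k m where "k < j" "entry cs k = (a, zs, Suc m)" unfolding mem_take[OF j] by blast
  then show ?L unfolding nthc_codeC' fnc_encE inc_encE outc_encE by auto
qed

lemma hdc_enc'[simp]: "hdc (list_encode (x # xs)) = x" by simp
lemma tlc_enc'[simp]: "tlc (list_encode (x # xs)) = list_encode xs" by simp

lemma nth_helper: "(a < lenc (list_encode xs) \<and> y = nthc (list_encode xs) a) \<longleftrightarrow> (a < length xs \<and> y = xs ! a)"
  by auto

lemma just_equiv:
  assumes "j < length cs"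
  shows "justN' c (list_encode xs) y (codeC cs) j \<longleftrightarrow> justH (take j cs) (c, xs, y)"
proof -
  have j: "j \<le> length cs" using assms by simp
  obtain gs where gs: "sndd (sndd c) = list_encode gs" by (metis list_decode_inverse)
  note d = d3[OF j] d4a[OF j] d4b[OF j] d5b[OF j]
  show ?thesis
  proof (cases xs)
    case Nil
    then show ?thesis
      unfolding justH_def
      by (simp only: justN'_def gs d3[OF j] nth_helper, simp only: consc_enc d) (simp add: gs Nil)
  next
    case (Cons x xs')
    then have h: "hdc (list_encode xs) = x" "tlc (list_encode xs) = list_encode xs'" "list_encode xs \<noteq> 0"
      by simp_all
    show ?thesis
      unfolding justH_def
      by (simp only: justN'_def gs d3[OF j] nth_helper, simp only: consc_enc h, simp only: d4b[OF j], simp only: d)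
         (simp add: gs Cons del: list_encode.simps)
  qed
qed


lemma justN_codeC: "j < length cs \<Longrightarrow> justN (codeC cs) j \<longleftrightarrow> justH (take j cs) (cs ! j)"
proof -
  assume j: "j < length cs"
  obtain c xs y where cs: "cs ! j = (c, xs, y)" by (cases "cs ! j") auto
  have "entry cs j = (c, xs, y)" using j cs by (simp add: entry_def)
  then have "justN (codeC cs) j \<longleftrightarrow> justN' c (list_encode xs) y (codeC cs) j"
    unfolding justN_def by simp
  also have "\<dots> \<longleftrightarrow> justH (take j cs) (c, xs, y)" by (rule just_equiv[OF j])
  finally show ?thesis using cs by simp
qed

lemma validN_codeC: "validN (codeC cs) \<longleftrightarrow> validH cs"
  unfolding validN_def validH_def lenc_codeC using justN_codeC by blast

definition decE :: "nat \<Rightarrow> jdg" where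
  "decE E = (fstd E, list_decode (fstd (sndd E)), sndd (sndd E))"

lemma encE_decE[simp]: "encE (decE E) = E"
  by (simp add: decE_def encE_def enc_fstd_sndd)

lemma codeC_surj: "\<exists>cs. C = codeC cs"
proof
  show "C = codeC (map decE (list_decode C))"
    unfolding codeC_def by (simp add: comp_def)
qed

lemma good_iff: "good w c v \<longleftrightarrow> (\<exists>cs. fstd w = codeC cs \<and> validH cs \<and> (c, [v], sndd w) \<in> set cs)"
proof
  assume g: "good w c v"
  obtain cs where cs: "fstd w = codeC cs" using codeC_surj by blast
  from g have "validH cs" unfolding good_def cs validN_codeC by blast
  moreover from g obtain k where "k < length cs" "encE (entry cs k) = prod_encode (c, prod_encode (list_encode [v], sndd w))"
    unfolding good_def cs by (auto simp: consc_def)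
  then have "k < length cs" "cs ! k = (c, [v], sndd w)" by (auto simp: entry_def)
  then have "(c, [v], sndd w) \<in> set cs" by (metis nth_mem)
  ultimately show "\<exists>cs. fstd w = codeC cs \<and> validH cs \<and> (c, [v], sndd w) \<in> set cs" using cs by blast
next
  assume "\<exists>cs. fstd w = codeC cs \<and> validH cs \<and> (c, [v], sndd w) \<in> set cs"
  then obtain cs where cs: "fstd w = codeC cs" "validH cs" "(c, [v], sndd w) \<in> set cs" by blast
  from cs(3) obtain k where "k < length cs" "cs ! k = (c, [v], sndd w)" by (auto simp: in_set_conv_nth)
  then have "k < length cs" "encE (entry cs k) = prod_encode (c, prod_encode (consc v 0, sndd w))"
    by (auto simp: entry_def consc_def)
  then show "good w c v" unfolding good_def cs(1) validN_codeC using cs(2) by auto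
qed

lemma good_sound: "good w (code f) v \<Longrightarrow> eval f [v] (sndd w)"
proof -
  assume "good w (code f) v"
  then obtain cs where cs: "validH cs" "(code f, [v], sndd w) \<in> set cs" using good_iff by blast
  from cs(2) obtain k where "k < length cs" "cs ! k = (code f, [v], sndd w)" by (auto simp: in_set_conv_nth)
  then show ?thesis using validH_sound[OF cs(1)] by blast
qed

lemma good_complete: "eval f [v] y \<Longrightarrow> good (prod_encode (codeC cs, y)) (code f) v \<or> (\<exists>w. good w (code f) v \<and> sndd w = y)"
proof -
  assume "eval f [v] y"
  from validH_complete[OF this] obtain cs where "validH cs" "(code f, [v], y) \<in> set cs" by blast
  then have "good (prod_encode (codeC cs, y)) (code f) v" using good_iff by auto
  then show ?thesis by auto
qed

lemma good_exists: "eval f [v] y \<Longrightarrow> \<exists>w. good w (code f) v \<and> sndd w = y"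
proof -
  assume "eval f [v] y"
  from validH_complete[OF this] obtain cs where "validH cs" "(code f, [v], y) \<in> set cs" by blast
  then have "good (prod_encode (codeC cs, y)) (code f) v" using good_iff by auto
  then show ?thesis by (intro exI[of _ "prod_encode (codeC cs, y)"]) simp
qed

definition rfr :: "nat \<Rightarrow> (nat list \<Rightarrow> nat) \<Rightarrow> recf" where
  "rfr n F = (SOME f. \<forall>xs. length xs = n \<longrightarrow> eval f xs (F xs))"

lemma rfr: assumes "rf n F" "length xs = n" shows "eval (rfr n F) xs (F xs)"
proof -
  have "\<exists>f. \<forall>xs. length xs = n \<longrightarrow> eval f xs (F xs)" using assms(1) unfolding rf_def .
  then have "\<forall>xs. length xs = n \<longrightarrow> eval (rfr n F) xs (F xs)" unfolding rfr_def by (rule someI_ex)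
  then show ?thesis using assms(2) by blast
qed

lemma rfr_iff: "rf n F \<Longrightarrow> length xs = n \<Longrightarrow> eval (rfr n F) xs y \<longleftrightarrow> y = F xs"
  using rfr eval_det by blast

definition CHK :: recf where "CHK = rfr 3 (\<lambda>e. if \<not> good (e!0) (e!1) (e!2) then 1 else 0)"
definition SNDR :: recf where "SNDR = rfr 1 (\<lambda>e. sndd (e!0))"
definition PHI :: recf where "PHI = Comp SNDR [Mn CHK]"

lemma rf_CHK: "rf 3 (\<lambda>e. if \<not> good (e!0) (e!1) (e!2) then 1 else 0)"
  using rfp_not[OF rfp_good3] unfolding rfp_def .

lemma CHK_iff: "eval CHK [w, c, v] r \<longleftrightarrow> r = (if good w c v then 0 else 1)"
  unfolding CHK_def using rfr_iff[OF rf_CHK, of "[w, c, v]" r] by simp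

lemma SNDR_iff: "eval SNDR [z] r \<longleftrightarrow> r = sndd z"
  unfolding SNDR_def using rfr_iff[OF rf_sndd1, of "[z]" r] by simp

lemma Mn_CHK: "eval (Mn CHK) [c, v] n \<longleftrightarrow> good n c v \<and> (\<forall>m<n. \<not> good m c v)"
proof
  assume "eval (Mn CHK) [c, v] n"
  then have "eval CHK (n # [c, v]) 0" "\<forall>m<n. \<exists>k. eval CHK (m # [c, v]) (Suc k)"
    by (auto elim: evalMnE)
  then show "good n c v \<and> (\<forall>m<n. \<not> good m c v)"
    unfolding CHK_iff by (metis Suc_neq_Zero zero_neq_one)
next
  assume a: "good n c v \<and> (\<forall>m<n. \<not> good m c v)"
  show "eval (Mn CHK) [c, v] n"
  proof (rule eval.mu)
    show "eval CHK (n # [c, v]) 0" using a CHK_iff by simp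
    show "\<forall>m<n. \<exists>k. eval CHK (m # [c, v]) (Suc k)" using a CHK_iff by simp
  qed
qed

lemma PHI_iff: "eval PHI [c, v] y \<longleftrightarrow> (\<exists>n. good n c v \<and> (\<forall>m<n. \<not> good m c v) \<and> y = sndd n)"
proof
  assume "eval PHI [c, v] y"
  then obtain zs where "list_all2 (\<lambda>g y. eval g [c, v] y) [Mn CHK] zs" "eval SNDR zs y"
    unfolding PHI_def by (auto elim: evalCompE)
  then obtain n where "eval (Mn CHK) [c, v] n" "eval SNDR [n] y"
    by (auto simp: list_all2_Cons1)
  then show "\<exists>n. good n c v \<and> (\<forall>m<n. \<not> good m c v) \<and> y = sndd n"
    using Mn_CHK SNDR_iff by blast
next
  assume "\<exists>n. good n c v \<and> (\<forall>m<n. \<not> good m c v) \<and> y = sndd n"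
  then obtain n where n: "good n c v \<and> (\<forall>m<n. \<not> good m c v)" "y = sndd n" by blast
  show "eval PHI [c, v] y" unfolding PHI_def
  proof (rule eval.comp)
    show "list_all2 (\<lambda>g y. eval g [c, v] y) [Mn CHK] [n]" using n(1) Mn_CHK by simp
    show "eval SNDR [n] y" using n(2) SNDR_iff by simp
  qed
qed

theorem PHI_univ: "eval PHI [code f, v] y \<longleftrightarrow> eval f [v] y"
proof
  assume "eval PHI [code f, v] y"
  then obtain n where "good n (code f) v" "y = sndd n" using PHI_iff by blast
  then show "eval f [v] y" using good_sound by blast
next
  assume e: "eval f [v] y"
  then obtain w where "good w (code f) v" by (meson good_exists)
  then have ex: "\<exists>n. good n (code f) v" by blast
  define n where "n = (LEAST n. good n (code f) v)"
  have n: "good n (code f) v" "\<forall>m<n. \<not> good m (code f) v"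
    using LeastI_ex[OF ex] not_less_Least unfolding n_def by blast+
  have "eval f [v] (sndd n)" using good_sound[OF n(1)] .
  then have "sndd n = y" using eval_det e by blast
  then show "eval PHI [code f, v] y" using PHI_iff n by blast
qed


function n2s :: "nat \<Rightarrow> bool list" where
  "n2s n = (if n = 0 then [] else even n # n2s ((n - 1) div 2))"
  by auto
termination by (relation "measure id") auto

declare n2s.simps[simp del]

lemma s2n_n2s[simp]: "s2n (n2s n) = n"
proof (induction n rule: less_induct)
  case (less n)
  show ?case
  proof (cases "n = 0")
    case True then show ?thesis by (simp add: n2s.simps)
  next
    case False
    then have IH: "s2n (n2s ((n - 1) div 2)) = (n - 1) div 2" using less by simp
    have e: "n2s n = even n # n2s ((n - 1) div 2)" using False by (subst n2s.simps) simp
    have "2 * ((n - 1) div 2) + (if even n then 2 else 1) = n" using False by presburger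
    then show ?thesis by (simp only: e s2n.simps(2) IH)
  qed
qed

lemma n2s_s2n[simp]: "n2s (s2n x) = x"
proof (induction x)
  case Nil then show ?case by (simp add: n2s.simps)
next
  case (Cons b bs)
  have "(s2n (b # bs) - 1) div 2 = s2n bs" by (cases b) auto
  then show ?case using Cons by (subst n2s.simps) auto
qed

lemma s2n_inj[simp]: "s2n x = s2n y \<longleftrightarrow> x = y"
  by (metis n2s_s2n)

lemma s2n_append: "s2n (xs @ ys) = s2n xs + 2 ^ length xs * s2n ys"
  by (induction xs) auto

lemma length_le_s2n: "length x \<le> s2n x"
  by (induction x) auto

definition tlN :: "nat \<Rightarrow> nat" where "tlN v = (v - 1) div 2"

lemma tlN_s2n: "tlN (s2n x) = s2n (tl x)"
  by (cases x) (auto simp: tlN_def)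

lemma tlNpow_s2n: "(tlN ^^ i) (s2n x) = s2n (drop i x)"
  by (induction i arbitrary: x) (auto simp: funpow_swap1 tlN_s2n drop_Suc tl_drop)

lemma hdT_s2n: "(even (s2n x) \<and> s2n x \<noteq> 0) \<longleftrightarrow> (x \<noteq> [] \<and> hd x)"
  by (cases x) auto

lemma rf_half1: "rf 1 (\<lambda>e. e!0 div 2)"
proof (rule rf_rec[where B="\<lambda>e. 0" and S="\<lambda>e. e!0 - e!1" and C="\<lambda>e. e!0"])
  fix e :: "nat list"
  have "primH (\<lambda>e. 0) (\<lambda>e. e!0 - e!1) i e = i div 2" for i
  proof (induction i)
    case (Suc i)
    have "Suc i div 2 = i - i div 2" by (cases "even i") (auto elim!: evenE oddE)
    then show ?case using Suc by simp
  qed simp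
  then show "primH (\<lambda>e. 0) (\<lambda>e. e!0 - e!1) (e!0) e = e!0 div 2" .
qed (intro rf_zero rf_sub rf_proj; simp)+

lemma rf_half: "rf n A \<Longrightarrow> rf n (\<lambda>e. A e div 2)" by (rule rf_op1[OF rf_half1])

lemma rf_tlN: "rf n A \<Longrightarrow> rf n (\<lambda>e. tlN (A e))" unfolding tlN_def by (intro rf_half rf_pred)

lemma rf_tlNpow2: "rf 2 (\<lambda>e. (tlN ^^ (e!0)) (e!1))"
proof (rule rf_rec[where B="\<lambda>e. e!1" and S="\<lambda>e. tlN (e!1)" and C="\<lambda>e. e!0"])
  fix e :: "nat list"
  have "primH (\<lambda>e. e!1) (\<lambda>e. tlN (e!1)) i e = (tlN ^^ i) (e!1)" for i by (induction i) auto
  then show "primH (\<lambda>e. e!1) (\<lambda>e. tlN (e!1)) (e!0) e = (tlN ^^ (e!0)) (e!1)" .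
qed (intro rf_tlN rf_proj; simp)+

lemma rf_tlNpow: "rf n A \<Longrightarrow> rf n B \<Longrightarrow> rf n (\<lambda>e. (tlN ^^ (A e)) (B e))"
  by (rule rf_op2[OF rf_tlNpow2])

lemma rf_pow2_1: "rf 1 (\<lambda>e. 2 ^ (e!0))"
proof (rule rf_rec[where B="\<lambda>e. 1" and S="\<lambda>e. e!1 + e!1" and C="\<lambda>e. e!0"])
  fix e :: "nat list"
  have "primH (\<lambda>e. 1) (\<lambda>e. e!1 + e!1) i e = 2 ^ i" for i by (induction i) auto
  then show "primH (\<lambda>e. 1) (\<lambda>e. e!1 + e!1) (e!0) e = 2 ^ (e!0)" .
qed (intro rf_const rf_add rf_proj; simp)+

lemma rf_pow2: "rf n A \<Longrightarrow> rf n (\<lambda>e. 2 ^ (A e))" by (rule rf_op1[OF rf_pow2_1])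

lemma rfp_even: "rf n A \<Longrightarrow> rfp n (\<lambda>e. even (A e))"
proof -
  assume a: "rf n A"
  have "rfp n (\<lambda>e. A e = 2 * (A e div 2))" by (intro rfp_eq rf_mult rf_const rf_half a)
  then show ?thesis unfolding rfp_def
  proof (rule rf_ext)
    fix e :: "nat list"
    have "even (A e) \<longleftrightarrow> A e = 2 * (A e div 2)"
      by (metis dvd_triv_left even_two_times_div_two)
    then show "(if A e = 2 * (A e div 2) then 1 else 0) = (if even (A e) then 1 else (0::nat))" by (simp only:)
  qed
qed

definition pidx :: "nat \<Rightarrow> nat" where
  "pidx v = card {i. i < v \<and> (\<forall>k<Suc i. even ((tlN ^^ k) v) \<and> (tlN ^^ k) v \<noteq> 0)}"

lemma rf_pidx: "rf n A \<Longrightarrow> rf n (\<lambda>e. pidx (A e))"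
  unfolding pidx_def by (intro rf_basic rfp_even rf_tlNpow rf_tl; assumption?)

lemma pidx_code: "pidx (s2n (replicate p True @ False # y)) = p"
proof -
  let ?x = "replicate p True @ False # y"
  let ?v = "s2n ?x"
  have T: "(even ((tlN ^^ k) ?v) \<and> (tlN ^^ k) ?v \<noteq> 0) \<longleftrightarrow> k < p" if "k \<le> p" for k
  proof -
    have "(even ((tlN ^^ k) ?v) \<and> (tlN ^^ k) ?v \<noteq> 0) \<longleftrightarrow> (drop k ?x \<noteq> [] \<and> hd (drop k ?x))"
      unfolding tlNpow_s2n hdT_s2n ..
    also have "\<dots> \<longleftrightarrow> k < p"
    proof (cases "k < p")
      case True
      then have "drop k ?x = replicate (p - k) True @ False # y" by simp
      then show ?thesis using True by (cases "p - k") auto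
    next
      case False
      then have "k = p" using that by simp
      then have "drop k ?x = False # y" by simp
      then show ?thesis using False by simp
    qed
    finally show ?thesis .
  qed
  have "p < ?v" using length_le_s2n[of ?x] by simp
  have "{i. i < ?v \<and> (\<forall>k<Suc i. even ((tlN ^^ k) ?v) \<and> (tlN ^^ k) ?v \<noteq> 0)} = {..<p}"
  proof (intro set_eqI iffI)
    fix i assume "i \<in> {i. i < ?v \<and> (\<forall>k<Suc i. even ((tlN ^^ k) ?v) \<and> (tlN ^^ k) ?v \<noteq> 0)}"
    then have a: "\<forall>k<Suc i. even ((tlN ^^ k) ?v) \<and> (tlN ^^ k) ?v \<noteq> 0" by blast
    show "i \<in> {..<p}"
    proof (rule ccontr)
      assume "i \<notin> {..<p}"
      then have "p < Suc i" by simp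
      with a have "even ((tlN ^^ p) ?v) \<and> (tlN ^^ p) ?v \<noteq> 0" by blast
      with T[of p] show False by simp
    qed
  next
    fix i assume "i \<in> {..<p}"
    then show "i \<in> {i. i < ?v \<and> (\<forall>k<Suc i. even ((tlN ^^ k) ?v) \<and> (tlN ^^ k) ?v \<noteq> 0)}"
      using T \<open>p < ?v\<close> by auto
  qed
  then show ?thesis unfolding pidx_def by simp
qed


definition mach :: "recf \<Rightarrow> bool list \<Rightarrow> bool list option" where
  "mach f x = (if \<exists>y. eval f [s2n x] y then Some (n2s (THE y. eval f [s2n x] y)) else None)"

lemma mach_iff: "mach f x = Some z \<longleftrightarrow> eval f [s2n x] (s2n z)"
proof
  assume m: "mach f x = Some z"
  then obtain y where y: "eval f [s2n x] y" unfolding mach_def by (auto split: if_splits)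
  then have "(THE y. eval f [s2n x] y) = y" using eval_det by blast
  then have "mach f x = Some (n2s y)" using y unfolding mach_def by auto
  then have "z = n2s y" using m by simp
  then show "eval f [s2n x] (s2n z)" using y by simp
next
  assume e: "eval f [s2n x] (s2n z)"
  then have "(THE y. eval f [s2n x] y) = s2n z" using eval_det by blast
  then show "mach f x = Some z" using e unfolding mach_def by auto
qed

lemma mach_pc: "partial_computable (mach f)"
  unfolding partial_computable_def using mach_iff by blast

lemma eval_Comp1: "eval (Comp f [g]) xs z \<longleftrightarrow> (\<exists>a. eval g xs a \<and> eval f [a] z)"
proof
  assume "eval (Comp f [g]) xs z"
  then obtain ys where "list_all2 (\<lambda>g y. eval g xs y) [g] ys" "eval f ys z" by (rule evalCompE) blast
  then show "\<exists>a. eval g xs a \<and> eval f [a] z" by (auto simp: list_all2_Cons1)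
next
  assume "\<exists>a. eval g xs a \<and> eval f [a] z"
  then obtain a where "eval g xs a" "eval f [a] z" by blast
  then show "eval (Comp f [g]) xs z" by (intro eval.comp[of _ _ "[a]"]) auto
qed

lemma eval_Comp2: "eval (Comp f [g1, g2]) xs z \<longleftrightarrow> (\<exists>a b. eval g1 xs a \<and> eval g2 xs b \<and> eval f [a, b] z)"
proof
  assume "eval (Comp f [g1, g2]) xs z"
  then obtain ys where "list_all2 (\<lambda>g y. eval g xs y) [g1, g2] ys" "eval f ys z" by (rule evalCompE) blast
  then show "\<exists>a b. eval g1 xs a \<and> eval g2 xs b \<and> eval f [a, b] z" by (auto simp: list_all2_Cons1)
next
  assume "\<exists>a b. eval g1 xs a \<and> eval g2 xs b \<and> eval f [a, b] z"
  then obtain a b where "eval g1 xs a" "eval g2 xs b" "eval f [a, b] z" by blast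
  then show "eval (Comp f [g1, g2]) xs z" by (intro eval.comp[of _ _ "[a, b]"]) auto
qed

lemma eval_Proj0: "eval (Proj 0) [v] a \<longleftrightarrow> a = v"
  by (auto elim: evalProjE intro: eval.proj[of 0 "[v]", simplified])

lemma eval_rfr1: "rf 1 F \<Longrightarrow> eval (rfr 1 F) [v] a \<longleftrightarrow> a = F [v]"
  using rfr_iff[of 1 F "[v]" a] by simp

definition PIDXR :: recf where "PIDXR = rfr 1 (\<lambda>e. pidx (e!0))"
definition VR :: recf where "VR = Comp PHI [Comp PHI [PIDXR, Proj 0], Proj 0]"

lemma rf_pidx1: "rf 1 (\<lambda>e. pidx (e!0))" by (intro rf_pidx rf_proj) simp

lemma VR_iff: "eval VR [v] r \<longleftrightarrow> (\<exists>a. eval PHI [pidx v, v] a \<and> eval PHI [a, v] r)"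
  unfolding VR_def eval_Comp2 eval_Proj0 PIDXR_def eval_rfr1[OF rf_pidx1] by auto

definition C0 :: recf where "C0 = Comp Succ [Zero]"
definition C1 :: recf where "C1 = Comp Succ [C0]"

lemma eval_C0: "eval C0 [v] r \<longleftrightarrow> r = 1"
  unfolding C0_def eval_Comp1
  by (auto elim!: evalZeroE evalSuccE intro: eval.zero eval.succ[of 0 "[]", simplified])

lemma eval_C1: "eval C1 [v] r \<longleftrightarrow> r = 2"
proof -
  have "eval Succ [1] (Suc 1)" using eval.succ[of 1 "[]"] .
  moreover have "Suc 1 = (2::nat)" by simp
  ultimately have "eval Succ [1] 2" by metis
  then show ?thesis unfolding C1_def eval_Comp1 eval_C0
    by (metis evalSuccE list.inject numeral_1_eq_Suc_0 numeral_2_eq_2)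
qed

lemma s2n_replicate_True': "s2n (replicate p True) + 2 = 2 ^ Suc p"
  by (induction p) auto

lemma s2n_replicate_True: "s2n (replicate p True) = 2 ^ Suc p - 2"
  using s2n_replicate_True'[of p] by simp

lemma s2n_T: "s2n ((replicate p True @ [False]) @ y) = (3 * 2 ^ p - 2) + 2 ^ Suc p * s2n y"
proof -
  have "(2::nat) \<le> 2 ^ Suc p" by simp
  then have "s2n (replicate p True @ [False]) = 3 * 2 ^ p - 2"
    by (simp add: s2n_append s2n_replicate_True)
  then show ?thesis by (simp add: s2n_append)
qed


lemma main_count:
  assumes opt: "effectively_optimal U"
    and hpc: "partial_computable h" and hb: "\<forall>x y. h x = Some y \<longrightarrow> y \<in> {bit0, bit1}"
  shows "\<exists>N0. \<forall>n\<ge>N0. 2 ^ (n - N0) \<le> 2 * card {x. length x \<le> n \<and>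
      (h x = None \<or> (U x = Some bit0 \<and> h x = Some bit1) \<or> (U x = Some bit1 \<and> h x = Some bit0))}"
proof -
  obtain hr where hr: "\<forall>x y. h x = Some y \<longleftrightarrow> eval hr [s2n x] (s2n y)"
    using hpc unfolding partial_computable_def by blast
  define V where "V = mach VR"
  have "machine V" using mach_pc V_def by simp
  then obtain t where tc: "total_computable t" and lb: "length_bounded t" and tV: "\<forall>x. V x = U (t x)"
    using opt unfolding effectively_optimal_def by blast
  obtain gr where gr: "\<forall>x y. Some (t x) = Some y \<longleftrightarrow> eval gr [s2n x] (s2n y)"
    using tc unfolding total_computable_def partial_computable_def by blast
  obtain cb where cb: "\<forall>x. length (t x) \<le> length x + cb" using lb unfolding length_bounded_def by blast
  define Gn where "Gn v = s2n (t (n2s v))" for v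
  have gr_iff: "eval gr [v] a \<longleftrightarrow> a = Gn v" for v a
  proof -
    have "eval gr [s2n (n2s v)] (s2n (n2s a)) \<longleftrightarrow> Some (t (n2s v)) = Some (n2s a)" using gr by blast
    also have "\<dots> \<longleftrightarrow> s2n (t (n2s v)) = s2n (n2s a)" by (simp del: s2n_n2s)
    finally show ?thesis unfolding Gn_def by auto
  qed
  have rfG: "rf 1 (\<lambda>e. Gn (e!0))" unfolding rf_def
  proof (intro exI allI impI)
    fix xs :: "nat list" assume "length xs = 1"
    then obtain v where "xs = [v]" by (cases xs) auto
    then show "eval gr xs (Gn (xs!0))" using gr_iff by simp
  qed
  have rfGn: "rf n A \<Longrightarrow> rf n (\<lambda>e. Gn (A e))" for n A by (rule rf_op1[OF rfG])
  have hr_iff: "eval hr [Gn v] a \<longleftrightarrow> h (t (n2s v)) = Some (n2s a)" for v a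
    using hr[rule_format, of "t (n2s v)" "n2s a"] unfolding Gn_def by simp
  define FLIPR where "FLIPR = rfr 1 (\<lambda>e. 3 - e!0)"
  have rfF: "rf 1 (\<lambda>e. 3 - e!0)" by (intro rf_sub rf_const rf_proj) simp
  define HF where "HF = Comp FLIPR [Comp hr [gr]]"
  have HF_iff: "eval HF [v] r \<longleftrightarrow> (\<exists>a. h (t (n2s v)) = Some (n2s a) \<and> r = 3 - a)" for v r
    unfolding HF_def eval_Comp1 FLIPR_def eval_rfr1[OF rfF] gr_iff using hr_iff by auto
  define cntf where "cntf v = card {m. m < (tlN ^^ Suc (pidx v)) v \<and>
     Gn (3 * 2 ^ pidx v - 2 + 2 ^ Suc (pidx v) * m) = Gn v}" for v
  have rf_cnt: "rf 1 (\<lambda>e. cntf (e!0))"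
    unfolding cntf_def by (intro rf_all rfGn rf_pidx rf_tlNpow rf_pow2 rf_tl; simp?)
  define J where "J v = (if cntf v = 0 then code HF else if cntf v = 1 then code C0 else code C1)" for v
  have rfJ: "rf 1 (\<lambda>e. J (e!0))" unfolding J_def by (intro rf_if rfp_eq rf_cnt rf_const)
  define JR where "JR = rfr 1 (\<lambda>e. J (e!0))"
  define p0 where "p0 = code JR"
  define T where "T y = (replicate p0 True @ [False]) @ y" for y
  have sT: "s2n (T y) = (3 * 2 ^ p0 - 2) + 2 ^ Suc p0 * s2n y" for y using s2n_T T_def by simp
  have pT: "pidx (s2n (T y)) = p0" for y using pidx_code[of p0 y] T_def by simp
  have tT: "(tlN ^^ Suc p0) (s2n (T y)) = s2n y" for y
  proof -
    have "drop (Suc p0) (T y) = y" unfolding T_def by simp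
    then show ?thesis unfolding tlNpow_s2n by simp
  qed
  define cnt where "cnt y = card {m. m < s2n y \<and> t (T (n2s m)) = t (T y)}" for y
  have cnt_eq: "cntf (s2n (T y)) = cnt y" for y
  proof -
    have "Gn (3 * 2 ^ p0 - 2 + 2 ^ Suc p0 * m) = Gn (s2n (T y)) \<longleftrightarrow> t (T (n2s m)) = t (T y)" for m
    proof -
      have "n2s (3 * 2 ^ p0 - 2 + 2 ^ Suc p0 * m) = T (n2s m)"
        using arg_cong[OF sT[of "n2s m"], of n2s] by simp
      then show ?thesis unfolding Gn_def by simp
    qed
    then show ?thesis unfolding cntf_def cnt_def pT tT by simp
  qed
  have VT: "V (T y) = Some r \<longleftrightarrow> eval PHI [J (s2n (T y)), s2n (T y)] (s2n r)" for y r
    unfolding V_def mach_iff VR_iff pT p0_def PHI_univ JR_def eval_rfr1[OF rfJ] by simp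
  have V0: "V (T y) = Some (n2s (3 - s2n b))" if "cnt y = 0" "h (t (T y)) = Some b" for y b
  proof -
    have "J (s2n (T y)) = code HF" using that cnt_eq unfolding J_def by simp
    moreover have "eval PHI [code HF, s2n (T y)] (3 - s2n b)" unfolding PHI_univ HF_iff using that(2) by (intro exI[of _ "s2n b"]) simp
    ultimately show ?thesis unfolding VT by simp
  qed
  have V1: "V (T y) = Some bit0" if "cnt y = 1" for y
  proof -
    have "J (s2n (T y)) = code C0" using that cnt_eq unfolding J_def by simp
    moreover have "eval PHI [code C0, s2n (T y)] 1" unfolding PHI_univ eval_C0 by simp
    ultimately show ?thesis unfolding VT by simp
  qed
  have V2: "V (T y) = Some bit1" if "cnt y \<ge> 2" for y
  proof -
    have "J (s2n (T y)) = code C1" using that cnt_eq unfolding J_def by simp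
    moreover have "eval PHI [code C1, s2n (T y)] 2" unfolding PHI_univ eval_C1 by simp
    ultimately show ?thesis unfolding VT by (simp add: numeral_2_eq_2)
  qed
  have n21: "n2s 1 = [False]" using n2s_s2n[of "[False]"] by simp
  have n22: "n2s 2 = [True]" using n2s_s2n[of "[True]"] by (simp add: numeral_2_eq_2)
  have errpt: "h z = None \<or> (U z = Some bit0 \<and> h z = Some bit1) \<or> (U z = Some bit1 \<and> h z = Some bit0)"
    if "z = t (T y)" for z y
  proof -
    have ex: "\<exists>m. t (T (n2s m)) = z" using that by (intro exI[of _ "s2n y"]) simp
    define m0 where "m0 = (LEAST m. t (T (n2s m)) = z)"
    have m0: "t (T (n2s m0)) = z" using LeastI_ex[OF ex] m0_def by simp
    have c0: "cnt (n2s m0) = 0"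
    proof -
      have "\<not> (m < m0 \<and> t (T (n2s m)) = z)" for m
        using not_less_Least[of m "\<lambda>m. t (T (n2s m)) = z"] m0_def by blast
      then have "{m. m < s2n (n2s m0) \<and> t (T (n2s m)) = t (T (n2s m0))} = {}"
        unfolding m0 s2n_n2s by blast
      then show ?thesis unfolding cnt_def by simp
    qed
    show ?thesis
    proof (cases "h z")
      case None then show ?thesis by simp
    next
      case (Some b)
      then have b: "b \<in> {bit0, bit1}" using hb by blast
      have "U z = V (T (n2s m0))" using tV m0 by metis
      also have "\<dots> = Some (n2s (3 - s2n b))" using V0[OF c0, of b] m0 Some by metis
      finally have Uz: "U z = Some (n2s (3 - s2n b))" .
      show ?thesis
      proof (cases "b = bit0")
        case True
        then have "U z = Some bit1" using Uz n22 by simp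
        then show ?thesis using Some True by simp
      next
        case False
        then have "b = bit1" using b by blast
        then have "U z = Some bit0" using Uz n21 by simp
        then show ?thesis using Some \<open>b = bit1\<close> by simp
      qed
    qed
  qed
  have fib: "card S \<le> 2" if fS: "finite S" and SF: "S \<subseteq> {m. t (T (n2s m)) = z}" for S z
  proof (rule ccontr)
    define F where "F = {m. t (T (n2s m)) = z}"
    define cF where "cF m = card {m'. m' < m \<and> m' \<in> F}" for m
    have cntF: "cnt (n2s m) = cF m" if "m \<in> F" for m
      using that unfolding cnt_def cF_def F_def by simp
    have noboth: "\<not> (a \<in> F \<and> b \<in> F \<and> cF a = 1 \<and> cF b \<ge> 2)" for a b
    proof
      assume a: "a \<in> F \<and> b \<in> F \<and> cF a = 1 \<and> cF b \<ge> 2"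
      then have "V (T (n2s a)) = Some bit0" "V (T (n2s b)) = Some bit1" using V1 V2 cntF by auto
      moreover have "V (T (n2s a)) = U z" "V (T (n2s b)) = U z" using a tV unfolding F_def by auto
      ultimately show False by simp
    qed
    have climb: "b \<in> F \<Longrightarrow> cF b \<ge> 2 \<Longrightarrow> \<exists>a\<in>F. cF a = 1" for b
    proof (induction b rule: less_induct)
      case (less b)
      have "Suc (Suc 0) \<le> card {m'. m' < b \<and> m' \<in> F}" using less.prems(2) unfolding cF_def by simp
      then obtain a1 B1 where B1: "{m'. m' < b \<and> m' \<in> F} = insert a1 B1" "a1 \<notin> B1" "Suc 0 \<le> card B1"
        unfolding card_le_Suc_iff by blast
      then obtain a2 B2 where "B1 = insert a2 B2" unfolding card_le_Suc_iff by blast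
      then have a12: "a1 < b" "a1 \<in> F" "a2 < b" "a2 \<in> F" "a1 \<noteq> a2" using B1 by blast+
      define lo where "lo = min a1 a2"
      define hi where "hi = max a1 a2"
      have lh: "lo < hi" "hi < b" "lo \<in> F" "hi \<in> F" using a12 unfolding lo_def hi_def by (auto simp: min_def max_def)
      have "lo \<in> {m'. m' < hi \<and> m' \<in> F}" using lh by simp
      moreover have "finite {m'. m' < hi \<and> m' \<in> F}" by simp
      ultimately have "cF hi \<ge> 1" unfolding cF_def by (metis One_nat_def Suc_leI card_gt_0_iff empty_iff)
      show ?case
      proof (cases "cF hi = 1")
        case True then show ?thesis using lh by blast
      next
        case False
        then have "cF hi \<ge> 2" using \<open>cF hi \<ge> 1\<close> by simp
        then show ?thesis using less.IH[OF lh(2) lh(4)] by blast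
      qed
    qed
    assume "\<not> card S \<le> 2"
    then have cS: "card S \<ge> 3" by simp
    then have "S \<noteq> {}" by auto
    define m2 where "m2 = Max S"
    have m2S: "m2 \<in> S" using Max_in[OF fS \<open>S \<noteq> {}\<close>] m2_def by simp
    have "S - {m2} \<subseteq> {m'. m' < m2 \<and> m' \<in> F}"
      using Max_ge[OF fS] SF m2_def unfolding F_def by fastforce
    then have "card (S - {m2}) \<le> cF m2" unfolding cF_def by (intro card_mono) auto
    moreover have "card (S - {m2}) = card S - 1" using m2S fS by simp
    ultimately have "cF m2 \<ge> 2" using cS by simp
    moreover have "m2 \<in> F" using m2S SF unfolding F_def by blast
    ultimately obtain a where "a \<in> F" "cF a = 1" using climb by blast
    then show False using noboth \<open>cF m2 \<ge> 2\<close> \<open>m2 \<in> F\<close> by blast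
  qed
  define N0 where "N0 = p0 + 1 + cb"
  have "2 ^ (n - N0) \<le> 2 * card {x. length x \<le> n \<and>
      (h x = None \<or> (U x = Some bit0 \<and> h x = Some bit1) \<or> (U x = Some bit1 \<and> h x = Some bit0))}"
    if "n \<ge> N0" for n
  proof -
    define L where "L = n - N0"
    define Y where "Y = {y :: bool list. length y = L}"
    define Z where "Z = (\<lambda>y. t (T y)) ` Y"
    define E where "E = {x. length x \<le> n \<and>
      (h x = None \<or> (U x = Some bit0 \<and> h x = Some bit1) \<or> (U x = Some bit1 \<and> h x = Some bit0))}"
    have cY: "card Y = 2 ^ L"
      using card_lists_length_eq[of "UNIV :: bool set" L] unfolding Y_def by simp
    have fY: "finite Y"
      using finite_lists_length_eq[of "UNIV :: bool set" L] unfolding Y_def by simp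
    have fZ: "finite Z" unfolding Z_def using fY by simp
    have fib2: "card {y \<in> Y. t (T y) = z} \<le> 2" for z
    proof -
      have "card {y \<in> Y. t (T y) = z} = card (s2n ` {y \<in> Y. t (T y) = z})"
        by (rule card_image[symmetric]) (simp add: inj_on_def)
      also have "\<dots> \<le> 2" by (rule fib[where z=z]) (use fY in auto)
      finally show ?thesis .
    qed
    have "Y = (\<Union>z\<in>Z. {y \<in> Y. t (T y) = z})" unfolding Z_def by auto
    then have "card Y \<le> (\<Sum>z\<in>Z. card {y \<in> Y. t (T y) = z})" using card_UN_le[OF fZ] by metis
    also have "\<dots> \<le> (\<Sum>z\<in>Z. 2)" by (intro sum_mono fib2)
    also have "\<dots> = 2 * card Z" by simp
    finally have c1: "2 ^ L \<le> 2 * card Z" using cY by simp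
    have "Z \<subseteq> E"
    proof
      fix z assume "z \<in> Z"
      then obtain y where y: "length y = L" "z = t (T y)" unfolding Z_def Y_def by blast
      have "length z \<le> length (T y) + cb" using cb y by simp
      also have "\<dots> = n" using y that unfolding T_def L_def N0_def by simp
      finally show "z \<in> E" using errpt[OF y(2)] unfolding E_def by blast
    qed
    moreover have "finite E"
      by (rule finite_subset[OF _ finite_lists_length_le[of "UNIV :: bool set" n]]) (auto simp: E_def)
    ultimately have "card Z \<le> card E" by (rule card_mono[rotated])
    then show ?thesis using c1 unfolding E_def L_def by simp
  qed
  then show ?thesis by blast
qed


lemma ratio_bound:
  fixes c n N0 :: nat
  assumes "2 ^ (n - N0) \<le> 2 * c" "n \<ge> N0"
  shows "1 / 2 ^ (N0 + 2) \<le> real c / 2 ^ (n + 1)"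
proof -
  have c: "(2::real) ^ (n - N0) \<le> 2 * real c" using assms(1)
    by (metis of_nat_le_iff of_nat_mult of_nat_numeral of_nat_power)
  have "(2::real) ^ (n + 1) = 2 ^ (n - N0) * 2 ^ (N0 + 1)"
    using assms(2) by (simp add: power_add[symmetric])
  also have "\<dots> \<le> (2 * real c) * 2 ^ (N0 + 1)" by (rule mult_right_mono[OF c]) simp
  also have "\<dots> = real c * 2 ^ (N0 + 2)" by simp
  finally have "(2::real) ^ (n + 1) \<le> real c * 2 ^ (N0 + 2)" .
  then show ?thesis by (simp add: field_simps)
qed

theorem theorem7p1:
  fixes U :: "bool list \<Rightarrow> bool list option"
  assumes "effectively_optimal U"
  defines "A \<equiv> {x. U x = Some bit0}"
      and "B \<equiv> {x. U x = Some bit1}"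
  shows "A \<inter> B = {} \<and> computably_inseparable A B \<and>
    (\<forall>h :: bool list \<Rightarrow> bool list option.
       partial_computable h \<and> (\<forall>x y. h x = Some y \<longrightarrow> y \<in> {bit0, bit1}) \<longrightarrow>
       Liminf sequentially (\<lambda>n::nat. ereal
         (real (card {x :: bool list. length x \<le> n \<and>
              (h x = None \<or> (x \<in> A \<and> h x = Some bit1) \<or> (x \<in> B \<and> h x = Some bit0))})
          / 2 ^ (n + 1))) > 0)"
proof -
  have setq: "{x :: bool list. length x \<le> n \<and>
              (h x = None \<or> (x \<in> A \<and> h x = Some bit1) \<or> (x \<in> B \<and> h x = Some bit0))}
     = {x. length x \<le> n \<and> (h x = None \<or> (U x = Some bit0 \<and> h x = Some bit1) \<or> (U x = Some bit1 \<and> h x = Some bit0))}"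
    for h n unfolding A_def B_def by simp
  have disj: "A \<inter> B = {}" unfolding A_def B_def by auto
  have insep: "computably_inseparable A B"
    unfolding computably_inseparable_def
  proof
    assume "\<exists>h. total_computable h \<and> (\<forall>x. h x \<in> {bit0, bit1}) \<and> (\<forall>x\<in>A. h x = bit0) \<and> (\<forall>x\<in>B. h x = bit1)"
    then obtain h where h: "total_computable h" "\<forall>x. h x \<in> {bit0, bit1}" "\<forall>x\<in>A. h x = bit0" "\<forall>x\<in>B. h x = bit1"
      by blast
    have pc: "partial_computable (\<lambda>x. Some (h x))" using h(1) unfolding total_computable_def .
    have hb: "\<forall>x y. Some (h x) = Some y \<longrightarrow> y \<in> {bit0, bit1}" using h(2) by auto
    obtain N0 where N0: "\<forall>n\<ge>N0. 2 ^ (n - N0) \<le> 2 * card {x. length x \<le> n \<and>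
      (Some (h x) = None \<or> (U x = Some bit0 \<and> Some (h x) = Some bit1) \<or> (U x = Some bit1 \<and> Some (h x) = Some bit0))}"
      using main_count[OF assms(1) pc hb] by blast
    define S where "S = {x. length x \<le> N0 \<and>
      (Some (h x) = None \<or> (U x = Some bit0 \<and> Some (h x) = Some bit1) \<or> (U x = Some bit1 \<and> Some (h x) = Some bit0))}"
    have "S = {}" using h(3,4) unfolding A_def B_def S_def by auto
    moreover have "2 ^ (N0 - N0) \<le> 2 * card S" using N0 unfolding S_def by blast
    ultimately show False by simp
  qed
  have lim: "Liminf sequentially (\<lambda>n::nat. ereal
         (real (card {x :: bool list. length x \<le> n \<and>
              (h x = None \<or> (x \<in> A \<and> h x = Some bit1) \<or> (x \<in> B \<and> h x = Some bit0))})
          / 2 ^ (n + 1))) > 0"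
    if hpc: "partial_computable h" and hb: "\<forall>x y. h x = Some y \<longrightarrow> y \<in> {bit0, bit1}"
    for h :: "bool list \<Rightarrow> bool list option"
  proof -
    obtain N0 where N0: "\<forall>n\<ge>N0. 2 ^ (n - N0) \<le> 2 * card {x. length x \<le> n \<and>
      (h x = None \<or> (U x = Some bit0 \<and> h x = Some bit1) \<or> (U x = Some bit1 \<and> h x = Some bit0))}"
      using main_count[OF assms(1) hpc hb] by blast
    have ev: "eventually (\<lambda>n. ereal (1 / 2 ^ (N0 + 2)) \<le> ereal
         (real (card {x :: bool list. length x \<le> n \<and>
              (h x = None \<or> (x \<in> A \<and> h x = Some bit1) \<or> (x \<in> B \<and> h x = Some bit0))})
          / 2 ^ (n + 1))) sequentially"
      unfolding eventually_sequentially setq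
      using N0 ratio_bound by (intro exI[of _ N0] allI impI) (simp only: ereal_less_eq(3))
    have "ereal (1 / 2 ^ (N0 + 2)) \<le> Liminf sequentially (\<lambda>n::nat. ereal
         (real (card {x :: bool list. length x \<le> n \<and>
              (h x = None \<or> (x \<in> A \<and> h x = Some bit1) \<or> (x \<in> B \<and> h x = Some bit0))})
          / 2 ^ (n + 1)))"
      by (rule Liminf_bounded[OF ev])
    moreover have "0 < ereal (1 / 2 ^ (N0 + 2))" by simp
    ultimately show ?thesis by (rule order.strict_trans2[rotated])
  qed
  show ?thesis using disj insep lim by blast
qed


end
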